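(* For every $X\in\{0,1\}^\infty$, the following are equivalent: (1) there exists a computable learning function that uniformly weakly detects that $X$ is patterned; (2) there exists a polynomial-time computable learning function that uniformly weakly detects that $X$ is patterned.
   Context: A learning function is a function $l:\{0,1\}^*\to\{\mathrm{yes},\mathrm{no}\}$. For $Y\in\{0,1\}^\infty$ and $m\in\mathbb N$, $Y\upharpoonright m$ denotes the length-$m$ prefix of $Y$. $\lambda$ denotes the uniform (Lebesgue) probability measure on $\{0,1\}^\infty$, i.e. $\lambda(\{Y: w\sqsubseteq Y\})=2^{-|w|}$. A learning function $l$ uniformly weakly detects that $X$ is patterned iff (i) $l(X\upharpoonright m)=\mathrm{yes}$ for infinitely many $m\in\mathbb N$, and (ii) for all $n\in\mathbb N$, $\lambda(\{Y\in\{0,1\}^\infty : \#\{m\in\mathbb N: l(Y\upharpoonright m)=\mathrm{yes}\}\ge n\})\le 2^{-n}$. A learning function is polynomial-time computable if some Turing machine computes $l(w)$ in time polynomial in $|w|$. *)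

theory Defs
  imports "HOL-Probability.Probability"
begin

text \<open>Finite binary strings are bool lists; infinite binary sequences are
  functions nat => bool.  A learning function returns True for yes, False for no.\<close>

type_synonym learning_fun = "bool list \<Rightarrow> bool"

definition restr :: "(nat \<Rightarrow> bool) \<Rightarrow> nat \<Rightarrow> bool list" where
  "restr Y m = map Y [0..<m]"

definition lambda_unif :: "(nat \<Rightarrow> bool) measure" where
  "lambda_unif = (\<Pi>\<^sub>M i\<in>(UNIV::nat set). measure_pmf (bernoulli_pmf (1/2)))"

definition uniformly_weakly_detects :: "learning_fun \<Rightarrow> (nat \<Rightarrow> bool) \<Rightarrow> bool" where
  "uniformly_weakly_detects l X \<longleftrightarrow>
     infinite {m. l (restr X m)} \<and>
     (\<forall>n::nat. emeasure lambda_unif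
        {Y \<in> space lambda_unif. \<exists>S. finite S \<and> card S \<ge> n \<and> S \<subseteq> {m. l (restr Y m)}}
        \<le> ennreal ((1/2) ^ n))"

datatype dir = Lft | Rgt | Stay

text \<open>States are 0..<Q; 0 is the start state, 1 the
  accepting (yes) and 2 the rejecting (no) halting state.  Symbols are 0..<S;
  0 is the blank, input bit False is written as 1 and True as 2.\<close>

record tm =
  nstates :: nat
  nsyms :: nat
  delta :: "nat \<Rightarrow> nat \<Rightarrow> nat \<times> nat \<times> dir"

definition wf_tm :: "tm \<Rightarrow> bool" where
  "wf_tm M \<longleftrightarrow> 3 \<le> nstates M \<and> 3 \<le> nsyms M \<and>
     (\<forall>q<nstates M. \<forall>a<nsyms M.
        fst (delta M q a) < nstates M \<and> fst (snd (delta M q a)) < nsyms M)"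

type_synonym config = "nat \<times> (int \<Rightarrow> nat) \<times> int"

definition move :: "dir \<Rightarrow> int" where
  "move d = (case d of Lft \<Rightarrow> -1 | Rgt \<Rightarrow> 1 | Stay \<Rightarrow> 0)"

definition step :: "tm \<Rightarrow> config \<Rightarrow> config" where
  "step M c = (case c of (q, tp, h) \<Rightarrow>
     if q = 1 \<or> q = 2 then c
     else (case delta M q (tp h) of (q', b, d) \<Rightarrow> (q', tp(h := b), h + move d)))"

definition init_config :: "bool list \<Rightarrow> config" where
  "init_config w = (0,
     (\<lambda>i. if 0 \<le> i \<and> i < int (length w) then (if w ! nat i then 2 else 1) else 0), 0)"

definition run :: "tm \<Rightarrow> bool list \<Rightarrow> nat \<Rightarrow> config" where
  "run M w t = (step M ^^ t) (init_config w)"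

definition out_state :: "bool \<Rightarrow> nat" where
  "out_state b = (if b then 1 else 2)"

text \<open>M computes l: on every input it reaches the halting state encoding l w
  (halting states are absorbing, so the output is well defined).\<close>
definition tm_computes :: "tm \<Rightarrow> learning_fun \<Rightarrow> bool" where
  "tm_computes M l \<longleftrightarrow> wf_tm M \<and> (\<forall>w. \<exists>t. fst (run M w t) = out_state (l w))"

definition tm_computes_in_time :: "tm \<Rightarrow> (nat \<Rightarrow> nat) \<Rightarrow> learning_fun \<Rightarrow> bool" where
  "tm_computes_in_time M T l \<longleftrightarrow> wf_tm M \<and>
     (\<forall>w. fst (run M w (T (length w))) = out_state (l w))"

definition computable_lf :: "learning_fun \<Rightarrow> bool" where
  "computable_lf l \<longleftrightarrow> (\<exists>M. tm_computes M l)"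

definition poly_time_computable_lf :: "learning_fun \<Rightarrow> bool" where
  "poly_time_computable_lf l \<longleftrightarrow>
     (\<exists>M c k. tm_computes_in_time M (\<lambda>n. c * (n + 1) ^ k) l)"

end

theory Submission
  imports Defs
begin

record cell =
  inp :: nat
  mt :: nat
  hd :: bool
  pl :: bool
  cz :: bool
  c0 :: bool
  ii :: bool
  tc :: bool

definition zc :: cell where
  "zc = \<lparr>inp = 0, mt = 0, hd = False, pl = False, cz = False, c0 = False, ii = False, tc = False\<rparr>"

datatype ast = Init | Acc | Rej | LSret | RI nat | LSt nat bool | RSt nat bool nat bool bool bool

definition rs_cell :: "tm \<Rightarrow> nat \<Rightarrow> bool \<Rightarrow> nat \<Rightarrow> bool \<Rightarrow> bool \<Rightarrow> bool \<Rightarrow> cell \<Rightarrow> ast \<times> cell" where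
  "rs_cell M q dn q' ca co mo c =
     (let c1 = (if ca then c\<lparr>hd := True\<rparr> else c);
          sn = (\<not> dn \<and> hd c);
          r = delta M q (mt c);
          qq = fst r; b = fst (snd r); d = snd (snd r);
          c2 = (if sn then (if d = Rgt then c1\<lparr>mt := b, hd := False\<rparr>
                            else if d = Lft then c1\<lparr>mt := b, pl := True\<rparr> else c1\<lparr>mt := b\<rparr>) else c1);
          unc = (inp c \<noteq> 0 \<and> \<not> cz c);
          c3 = (if unc \<and> \<not> co then c2\<lparr>cz := True\<rparr> else c2)
      in (RSt q (dn \<or> sn) (if sn then qq else q') (sn \<and> d = Rgt) (co \<or> unc) (mo \<or> (unc \<and> co)),
          c3\<lparr>tc := True\<rparr>))"

definition ri_cell :: "nat \<Rightarrow> cell \<Rightarrow> ast \<times> cell" where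
  "ri_cell e c = (let e0 = (if c0 c \<and> e = 0 then 1 else e);
                      ext = (e0 = 1 \<and> \<not> ii c);
                      ii' = (ii c \<or> ext)
                  in (RI (if ext then 2 else e0),
                      c\<lparr>ii := ii', mt := (if ii' then inp c else 0), hd := c0 c, pl := False\<rparr>))"

definition ls_cell :: "nat \<Rightarrow> bool \<Rightarrow> cell \<Rightarrow> ast \<times> cell" where
  "ls_cell q ca c = (let c1 = (if ca then c\<lparr>hd := True\<rparr> else c) in
      if pl c then (LSt q True, c1\<lparr>pl := False, hd := False, tc := True\<rparr>)
      else (LSt q False, c1\<lparr>tc := True\<rparr>))"

fun mtrans :: "tm \<Rightarrow> ast \<Rightarrow> cell \<Rightarrow> ast \<times> cell \<times> dir" where
  "mtrans M Init c = (if c = zc then (Rej, c, Stay)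
       else (LSt 0 False, c\<lparr>c0 := True, hd := True, tc := True\<rparr>, Lft))"
| "mtrans M Acc c = (Acc, c, Stay)"
| "mtrans M Rej c = (Rej, c, Stay)"
| "mtrans M LSret c = (if c = zc then (RI 0, c, Rgt) else (LSret, c, Lft))"
| "mtrans M (RI e) c = (if c = zc then (LSt 0 False, c, Lft)
       else (fst (ri_cell e c), snd (ri_cell e c), Rgt))"
| "mtrans M (LSt q ca) c = (if c = zc \<and> \<not> ca then (RSt q False 0 False False False, c, Rgt)
       else (fst (ls_cell q ca c), snd (ls_cell q ca c), Lft))"
| "mtrans M (RSt q dn q' ca co mo) c = (if c = zc \<and> \<not> ca then
       (if dn \<and> co \<and> \<not> mo then (if q' = 1 then Acc else Rej, c, Stay)
        else if dn \<and> co \<and> (q' = 1 \<or> q' = 2) then (LSret, c, Lft)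
        else if dn \<and> co then (LSt q' False, c, Lft)
        else (Rej, c, Stay))
     else (fst (rs_cell M q dn q' ca co mo c), snd (rs_cell M q dn q' ca co mo c), Rgt))"

type_synonym aconf = "ast \<times> (int \<Rightarrow> cell) \<times> int"

definition astep :: "tm \<Rightarrow> aconf \<Rightarrow> aconf" where
  "astep M cf = (case cf of (\<sigma>, T, h) \<Rightarrow>
     if \<sigma> = Acc \<or> \<sigma> = Rej then cf
     else (case mtrans M \<sigma> (T h) of (\<sigma>', c', d) \<Rightarrow> (\<sigma>', T(h := c'), h + move d)))"

definition fbits :: "cell \<Rightarrow> nat" where
  "fbits c = of_bool (hd c) + 2 * (of_bool (pl c) + 2 * (of_bool (cz c) + 2 * (of_bool (c0 c)
     + 2 * (of_bool (ii c) + 2 * of_bool (tc c)))))"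

definition encC :: "nat \<Rightarrow> cell \<Rightarrow> nat" where
  "encC S c = inp c + 3 * (mt c + S * fbits c)"

definition decC :: "nat \<Rightarrow> nat \<Rightarrow> cell" where
  "decC S n = (let f = n div 3 div S in
     \<lparr>inp = n mod 3, mt = n div 3 mod S, hd = odd f, pl = odd (f div 2), cz = odd (f div 4),
      c0 = odd (f div 8), ii = odd (f div 16), tc = odd (f div 32)\<rparr>)"

definition validC :: "nat \<Rightarrow> cell \<Rightarrow> bool" where
  "validC S c \<longleftrightarrow> inp c < 3 \<and> mt c < S"

lemma fbits_lt: "fbits c < 64"
  unfolding fbits_def by (cases "hd c"; cases "pl c"; cases "cz c"; cases "c0 c"; cases "ii c"; cases "tc c") auto

lemma fbits_dec:
  "odd (fbits c) = hd c" "odd (fbits c div 2) = pl c" "odd (fbits c div 4) = cz c"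
  "odd (fbits c div 8) = c0 c" "odd (fbits c div 16) = ii c" "odd (fbits c div 32) = tc c"
  unfolding fbits_def by (cases "hd c"; cases "pl c"; cases "cz c"; cases "c0 c"; cases "ii c"; cases "tc c"; simp)+

lemma aux_mod3: "(a::nat) < 3 \<Longrightarrow> (a + 3 * x) mod 3 = a" by simp
lemma aux_div3: "(a::nat) < 3 \<Longrightarrow> (a + 3 * x) div 3 = x" by simp
lemma aux_b3: "(a::nat) < 3 \<Longrightarrow> x + 1 \<le> y \<Longrightarrow> a + 3 * x < 3 * y" by simp

lemma decC_encC: assumes "validC S c" shows "decC S (encC S c) = c"
proof -
  have S: "S > 0" and i3: "inp c < 3" and mS: "mt c < S" using assms by (auto simp: validC_def)
  have e: "encC S c = inp c + 3 * (mt c + S * fbits c)" by (simp add: encC_def)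
  have a: "encC S c mod 3 = inp c" unfolding e using i3 by (rule aux_mod3)
  have b: "encC S c div 3 = mt c + S * fbits c" unfolding e using i3 by (rule aux_div3)
  have c: "(mt c + S * fbits c) mod S = mt c" using mS by simp
  have d: "(mt c + S * fbits c) div S = fbits c" using mS by simp
  show ?thesis unfolding decC_def Let_def a b c d fbits_dec by simp
qed

lemma encC_bound: assumes "validC S c" shows "encC S c < 3 * S * 64"
proof -
  have mS: "mt c < S" and i3: "inp c < 3" using assms by (auto simp: validC_def)
  have "fbits c \<le> 63" using fbits_lt[of c] by simp
  hence "S * fbits c \<le> S * 63" by simp
  hence "mt c + S * fbits c + 1 \<le> S * 64" using mS by linarith
  hence "inp c + 3 * (mt c + S * fbits c) < 3 * (S * 64)" using i3 by (rule aux_b3[rotated])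
  thus ?thesis unfolding encC_def by simp
qed

lemma validC_decC: "S > 0 \<Longrightarrow> validC S (decC S n)"
  by (simp add: decC_def validC_def Let_def)

lemma encC_zc: "encC S zc = 0" by (simp add: encC_def zc_def fbits_def)

definition sbits :: "bool \<Rightarrow> bool \<Rightarrow> bool \<Rightarrow> bool \<Rightarrow> nat" where
  "sbits a b c d = of_bool a + 2 * (of_bool b + 2 * (of_bool c + 2 * of_bool d))"

lemma sbits_lt: "sbits a b c d < 16"
  unfolding sbits_def by (cases a; cases b; cases c; cases d) auto

fun encS :: "nat \<Rightarrow> ast \<Rightarrow> nat" where
  "encS Q Init = 0"
| "encS Q Acc = 1"
| "encS Q Rej = 2"
| "encS Q LSret = 3"
| "encS Q (RI e) = 4 + e"
| "encS Q (LSt q ca) = 7 + q + Q * of_bool ca"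
| "encS Q (RSt q dn q' ca co mo) = 7 + 2 * Q + (q + Q * (q' + Q * sbits dn ca co mo))"

definition decS :: "nat \<Rightarrow> nat \<Rightarrow> ast" where
  "decS Q n = (if n = 0 then Init else if n = 1 then Acc else if n = 2 then Rej else if n = 3 then LSret
     else if n < 7 then RI (n - 4)
     else if n < 7 + 2 * Q then LSt ((n - 7) mod Q) ((n - 7) div Q = 1)
     else (let r = n - 7 - 2 * Q; f = r div Q div Q in
       RSt (r mod Q) (odd f) (r div Q mod Q) (odd (f div 2)) (odd (f div 4)) (odd (f div 8))))"

fun validS :: "nat \<Rightarrow> ast \<Rightarrow> bool" where
  "validS Q (RI e) = (e < 3)"
| "validS Q (LSt q ca) = (q < Q)"
| "validS Q (RSt q dn q' ca co mo) = (q < Q \<and> q' < Q)"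
| "validS Q _ = True"

lemma sbits_dec:
  "odd (sbits a b c d) = a" "odd (sbits a b c d div 2) = b" "odd (sbits a b c d div 4) = c"
  "odd (sbits a b c d div 8) = d"
  unfolding sbits_def by (cases a; cases b; cases c; cases d; simp)+

lemma decS_encS: assumes "validS Q s" shows "decS Q (encS Q s) = s"
proof (cases s)
  case (LSt q ca)
  have Q: "q < Q" using assms LSt by simp
  show ?thesis using Q LSt by (cases ca) (auto simp: decS_def)
next
  case (RSt q dn q' ca co mo)
  have Q: "q < Q" "q' < Q" using assms RSt by auto
  let ?r = "q + Q * (q' + Q * sbits dn ca co mo)"
  have r0: "7 + 2 * Q + ?r - 7 - 2 * Q = ?r" by simp
  have r1: "?r mod Q = q" using Q by simp
  have r2: "?r div Q = q' + Q * sbits dn ca co mo" using Q by simp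
  have r3: "(q' + Q * sbits dn ca co mo) mod Q = q'" using Q by simp
  have r4: "(q' + Q * sbits dn ca co mo) div Q = sbits dn ca co mo" using Q by simp
  have ge: "\<not> 7 + 2 * Q + ?r < 7 + 2 * Q" "7 + 2 * Q + ?r \<noteq> 0" "7 + 2 * Q + ?r \<noteq> 1"
    "7 + 2 * Q + ?r \<noteq> 2" "7 + 2 * Q + ?r \<noteq> 3" "\<not> 7 + 2 * Q + ?r < 7" by simp_all
  show ?thesis unfolding RSt encS.simps decS_def Let_def r0 r1 r2 r3 r4 sbits_dec
    using ge by (simp only: if_False)
qed (use assms in \<open>auto simp: decS_def\<close>)

lemma validS_decS: "Q > 0 \<Longrightarrow> validS Q (decS Q n)"
  by (auto simp: decS_def Let_def)

lemma aux_qy: "(q::nat) < Q \<Longrightarrow> y < K \<Longrightarrow> q + Q * y < Q * K"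
proof -
  assume a: "q < Q" "y < K"
  have "Q * (y + 1) \<le> Q * K" using a(2) by (intro mult_le_mono2) simp
  thus ?thesis using a(1) by simp
qed

lemma encS_bound: assumes "validS Q s" shows "encS Q s < 7 + 2 * Q + Q * Q * 16"
proof (cases s)
  case (RSt q dn q' ca co mo)
  have Q: "q < Q" "q' < Q" using assms RSt by auto
  have "q' + Q * sbits dn ca co mo < Q * 16"
  proof -
    have "sbits dn ca co mo \<le> 15" using sbits_lt[of dn ca co mo] by simp
    hence "Q * sbits dn ca co mo \<le> Q * 15" by simp
    thus ?thesis using Q by linarith
  qed
  hence "q + Q * (q' + Q * sbits dn ca co mo) < Q * (Q * 16)"
    using Q(1) by (rule aux_qy[rotated])
  thus ?thesis using RSt by simp
qed (use assms in auto)


definition QS :: "tm \<Rightarrow> nat" where "QS M = 7 + 2 * nstates M + nstates M * nstates M * 16"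
definition SC :: "tm \<Rightarrow> nat" where "SC M = 3 * nsyms M * 64"

definition simM :: "tm \<Rightarrow> tm" where
  "simM M = \<lparr>nstates = QS M, nsyms = SC M,
     delta = (\<lambda>qn an. case mtrans M (decS (nstates M) qn) (decC (nsyms M) an) of
        (\<sigma>, c, d) \<Rightarrow> (encS (nstates M) \<sigma>, encC (nsyms M) c, d))\<rparr>"

definition validConf :: "tm \<Rightarrow> aconf \<Rightarrow> bool" where
  "validConf M cf = (case cf of (\<sigma>, T, h) \<Rightarrow> validS (nstates M) \<sigma> \<and> (\<forall>i. validC (nsyms M) (T i)))"

definition encConf :: "tm \<Rightarrow> aconf \<Rightarrow> config" where
  "encConf M cf = (case cf of (\<sigma>, T, h) \<Rightarrow> (encS (nstates M) \<sigma>, encC (nsyms M) \<circ> T, h))"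

lemma wf_delta: "wf_tm M \<Longrightarrow> q < nstates M \<Longrightarrow> a < nsyms M \<Longrightarrow>
   fst (delta M q a) < nstates M \<and> fst (snd (delta M q a)) < nsyms M"
  by (simp add: wf_tm_def)

lemma mtrans_valid:
  assumes M: "wf_tm M" and s: "validS (nstates M) \<sigma>" and c: "validC (nsyms M) c"
  shows "validS (nstates M) (fst (mtrans M \<sigma> c)) \<and> validC (nsyms M) (fst (snd (mtrans M \<sigma> c)))"
proof -
  have Q3: "3 \<le> nstates M" and S3: "3 \<le> nsyms M" using M by (auto simp: wf_tm_def)
  show ?thesis
  proof (cases \<sigma>)
    case (RI e)
    then show ?thesis using s c S3 Q3 by (auto simp: ri_cell_def Let_def validC_def)
  next
    case (LSt q ca)
    then show ?thesis using s c Q3 by (auto simp: ls_cell_def Let_def validC_def)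
  next
    case (RSt q dn q' ca co mo)
    have qv: "q < nstates M" "q' < nstates M" using s RSt by auto
    have d: "fst (delta M q (mt c)) < nstates M \<and> fst (snd (delta M q (mt c))) < nsyms M"
      using wf_delta[OF M qv(1)] c by (auto simp: validC_def)
    show ?thesis using RSt s c d Q3 by (auto simp: rs_cell_def Let_def validC_def)
  qed (use s c Q3 in \<open>auto simp: validC_def zc_def\<close>)
qed

lemma astep_valid: "wf_tm M \<Longrightarrow> validConf M cf \<Longrightarrow> validConf M (astep M cf)"
proof -
  assume M: "wf_tm M" and v: "validConf M cf"
  obtain \<sigma> T h where cf: "cf = (\<sigma>, T, h)" by (cases cf) auto
  obtain \<sigma>' c' d where tr: "mtrans M \<sigma> (T h) = (\<sigma>', c', d)" by (cases "mtrans M \<sigma> (T h)") auto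
  have "validS (nstates M) \<sigma>'" "validC (nsyms M) c'"
    using mtrans_valid[OF M, of \<sigma> "T h"] v tr cf by (auto simp: validConf_def)
  thus ?thesis using v cf tr by (auto simp: validConf_def astep_def)
qed

lemma encS_halt: "validS Q \<sigma> \<Longrightarrow> (encS Q \<sigma> = 1 \<or> encS Q \<sigma> = 2) \<longleftrightarrow> (\<sigma> = Acc \<or> \<sigma> = Rej)"
  by (cases \<sigma>) auto

lemma step_sim:
  assumes M: "wf_tm M" and v: "validConf M cf"
  shows "step (simM M) (encConf M cf) = encConf M (astep M cf)"
proof -
  obtain \<sigma> T h where cf: "cf = (\<sigma>, T, h)" by (cases cf) auto
  have vs: "validS (nstates M) \<sigma>" and vc: "\<And>i. validC (nsyms M) (T i)" using v cf by (auto simp: validConf_def)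
  show ?thesis
  proof (cases "\<sigma> = Acc \<or> \<sigma> = Rej")
    case True
    then show ?thesis using cf by (auto simp: step_def astep_def encConf_def)
  next
    case False
    obtain \<sigma>' c' d where tr: "mtrans M \<sigma> (T h) = (\<sigma>', c', d)" by (cases "mtrans M \<sigma> (T h)") auto
    have nh: "\<not> (encS (nstates M) \<sigma> = 1 \<or> encS (nstates M) \<sigma> = 2)" using encS_halt[OF vs] False by simp
    have dl: "delta (simM M) (encS (nstates M) \<sigma>) (encC (nsyms M) (T h)) =
              (encS (nstates M) \<sigma>', encC (nsyms M) c', d)"
      using tr by (simp add: simM_def decS_encS[OF vs] decC_encC[OF vc])
    have "(encC (nsyms M) \<circ> T)(h := encC (nsyms M) c') = encC (nsyms M) \<circ> T(h := c')"
      by (auto simp: fun_eq_iff)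
    then show ?thesis using cf False nh dl tr by (simp add: step_def astep_def encConf_def)
  qed
qed

lemma run_sim:
  assumes M: "wf_tm M" and v: "validConf M cf"
  shows "(step (simM M) ^^ n) (encConf M cf) = encConf M ((astep M ^^ n) cf)
         \<and> validConf M ((astep M ^^ n) cf)"
proof (induction n)
  case 0 then show ?case using v by simp
next
  case (Suc n)
  then show ?case using step_sim[OF M] astep_valid[OF M] by simp
qed

definition initT :: "bool list \<Rightarrow> int \<Rightarrow> cell" where
  "initT w i = (if 0 \<le> i \<and> i < int (length w) then zc\<lparr>inp := (if w ! nat i then 2 else 1)\<rparr> else zc)"

lemma init_enc: "init_config w = encConf M (Init, initT w, 0)"
  by (auto simp: init_config_def encConf_def initT_def fun_eq_iff encC_def zc_def fbits_def)

lemma init_valid: "wf_tm M \<Longrightarrow> validConf M (Init, initT w, 0)"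
  by (auto simp: validConf_def initT_def validC_def zc_def wf_tm_def)

lemma wf_simM: assumes M: "wf_tm M" shows "wf_tm (simM M)"
proof -
  have Q3: "3 \<le> nstates M" and S3: "3 \<le> nsyms M" using M by (auto simp: wf_tm_def)
  have Qp: "0 < nstates M" and Sp: "0 < nsyms M" using Q3 S3 by auto
  { fix qn an
    obtain \<sigma>' c' d where tr: "mtrans M (decS (nstates M) qn) (decC (nsyms M) an) = (\<sigma>', c', d)"
      by (cases "mtrans M (decS (nstates M) qn) (decC (nsyms M) an)") auto
    have "validS (nstates M) \<sigma>'" "validC (nsyms M) c'"
      using mtrans_valid[OF M validS_decS[OF Qp, of qn] validC_decC[OF Sp, of an]] unfolding tr by auto
    hence "fst (delta (simM M) qn an) < QS M \<and> fst (snd (delta (simM M) qn an)) < SC M"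
      using tr encS_bound encC_bound by (simp add: simM_def QS_def SC_def)
  }
  thus ?thesis using Q3 S3 by (auto simp: wf_tm_def simM_def QS_def SC_def)
qed

lemma run_simM: assumes "wf_tm M"
  shows "run (simM M) w n = encConf M ((astep M ^^ n) (Init, initT w, 0))"
  unfolding run_def init_enc[of w M] using run_sim[OF assms init_valid[OF assms]] by blast

lemma encConf_fst: "validS (nstates M) \<sigma> \<Longrightarrow> fst (encConf M (\<sigma>, T, h)) = encS (nstates M) \<sigma>"
  by (simp add: encConf_def)


lemma astep_eq: "\<sigma> \<noteq> Acc \<Longrightarrow> \<sigma> \<noteq> Rej \<Longrightarrow> astep M (\<sigma>, T, h) =
   (fst (mtrans M \<sigma> (T h)), T(h := fst (snd (mtrans M \<sigma> (T h)))), h + move (snd (snd (mtrans M \<sigma> (T h)))))"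
  by (simp add: astep_def split: prod.split)

lemma astep_halt: "\<sigma> = Acc \<or> \<sigma> = Rej \<Longrightarrow> astep M (\<sigma>, T, h) = (\<sigma>, T, h)"
  by (auto simp: astep_def)

lemma funpow_halt: "\<sigma> = Acc \<or> \<sigma> = Rej \<Longrightarrow> (astep M ^^ n) (\<sigma>, T, h) = (\<sigma>, T, h)"
  by (induction n) (auto simp: astep_halt)

lemma sweepR_fun:
  assumes "\<And>p. h \<le> p \<Longrightarrow> p < h + int n \<Longrightarrow> fst (mtrans M (D p) (Told p)) = D (p+1)
       \<and> snd (snd (mtrans M (D p) (Told p))) = Rgt \<and> D p \<noteq> Acc \<and> D p \<noteq> Rej"
  shows "(astep M ^^ n) (D h, Told, h) = (D (h + int n),
     (\<lambda>i. if h \<le> i \<and> i < h + int n then fst (snd (mtrans M (D i) (Told i))) else Told i), h + int n)"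
  using assms
proof (induction n arbitrary: h Told)
  case 0
  then show ?case by (auto simp: fun_eq_iff)
next
  case (Suc n)
  have a: "fst (mtrans M (D h) (Told h)) = D (h+1)" "snd (snd (mtrans M (D h) (Told h))) = Rgt"
     "D h \<noteq> Acc" "D h \<noteq> Rej" using Suc.prems[of h] by auto
  let ?T' = "Told(h := fst (snd (mtrans M (D h) (Told h))))"
  have st: "astep M (D h, Told, h) = (D (h+1), ?T', h + 1)"
    using a by (simp add: astep_eq move_def)
  have IH: "(astep M ^^ n) (D (h+1), ?T', h+1) = (D (h + 1 + int n),
     (\<lambda>i. if h + 1 \<le> i \<and> i < h + 1 + int n then fst (snd (mtrans M (D i) (?T' i))) else ?T' i), h + 1 + int n)"
    by (rule Suc.IH) (use Suc.prems in auto)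
  show ?case unfolding funpow_Suc_right o_apply st IH
    by (auto simp: fun_eq_iff algebra_simps)
qed

lemma sweepL_fun:
  assumes "\<And>p. h - int n < p \<Longrightarrow> p \<le> h \<Longrightarrow> fst (mtrans M (D p) (Told p)) = D (p-1)
       \<and> snd (snd (mtrans M (D p) (Told p))) = Lft \<and> D p \<noteq> Acc \<and> D p \<noteq> Rej"
  shows "(astep M ^^ n) (D h, Told, h) = (D (h - int n),
     (\<lambda>i. if h - int n < i \<and> i \<le> h then fst (snd (mtrans M (D i) (Told i))) else Told i), h - int n)"
  using assms
proof (induction n arbitrary: h Told)
  case 0
  then show ?case by (auto simp: fun_eq_iff)
next
  case (Suc n)
  have a: "fst (mtrans M (D h) (Told h)) = D (h-1)" "snd (snd (mtrans M (D h) (Told h))) = Lft"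
     "D h \<noteq> Acc" "D h \<noteq> Rej" using Suc.prems[of h] by auto
  let ?T' = "Told(h := fst (snd (mtrans M (D h) (Told h))))"
  have st: "astep M (D h, Told, h) = (D (h-1), ?T', h - 1)"
    using a by (simp add: astep_eq move_def)
  have IH: "(astep M ^^ n) (D (h-1), ?T', h-1) = (D (h - 1 - int n),
     (\<lambda>i. if h - 1 - int n < i \<and> i \<le> h - 1 then fst (snd (mtrans M (D i) (?T' i))) else ?T' i), h - 1 - int n)"
    by (rule Suc.IH) (use Suc.prems in auto)
  show ?case unfolding funpow_Suc_right o_apply st IH
    by (auto simp: fun_eq_iff algebra_simps)
qed

lemma step_halt: "fst c = 1 \<or> fst c = 2 \<Longrightarrow> step M c = c"
  by (cases c) (auto simp: step_def)

lemma run_Suc: "run M v (Suc t) = step M (run M v t)"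
  by (simp add: run_def)

lemma run_halt_stay: "fst (run M v t) \<in> {1,2} \<Longrightarrow> run M v (t + n) = run M v t"
  by (induction n) (auto simp: run_Suc step_halt)

lemma run_0_state: "fst (run M v 0) = 0" by (simp add: run_def init_config_def)

definition HT :: "tm \<Rightarrow> bool list \<Rightarrow> nat" where
  "HT M v = (LEAST t. fst (run M v t) \<in> {1,2})"

lemma out_state_12: "out_state b \<in> {1,2}" by (simp add: out_state_def)

context
  fixes M l
  assumes comp: "\<forall>v. \<exists>t. fst (run M v t) = out_state (l v)"
begin

lemma HT_ex: "\<exists>t. fst (run M v t) \<in> {1,2}"
  using comp out_state_12 by metis

lemma HT_halt: "fst (run M v (HT M v)) \<in> {1,2}"
  unfolding HT_def by (rule LeastI_ex[OF HT_ex])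

lemma HT_iff: "fst (run M v t) \<in> {1,2} \<longleftrightarrow> HT M v \<le> t"
proof
  assume "fst (run M v t) \<in> {1,2}" thus "HT M v \<le> t" unfolding HT_def by (rule Least_le)
next
  assume "HT M v \<le> t"
  then obtain n where "t = HT M v + n" using le_Suc_ex by blast
  thus "fst (run M v t) \<in> {1,2}" using run_halt_stay[OF HT_halt] HT_halt by simp
qed

lemma HT_pos: "HT M v \<ge> 1"
proof (rule ccontr)
  assume "\<not> HT M v \<ge> 1" hence "HT M v = 0" by simp
  thus False using HT_halt[of v] run_0_state[of M v] by simp
qed

lemma HT_out: "fst (run M v (HT M v)) = out_state (l v)"
proof -
  obtain t where t: "fst (run M v t) = out_state (l v)" using comp by blast
  have "HT M v \<le> t" using t out_state_12 HT_iff by metis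
  then obtain n where "t = HT M v + n" using le_Suc_ex by blast
  thus ?thesis using t run_halt_stay[OF HT_halt] by simp
qed

end


lemma rs_cell_fst: "fst (rs_cell M q dn q' ca co mo c) =
  RSt q (dn \<or> hd c) (if \<not> dn \<and> hd c then fst (delta M q (mt c)) else q')
     (\<not> dn \<and> hd c \<and> snd (snd (delta M q (mt c))) = Rgt)
     (co \<or> (inp c \<noteq> 0 \<and> \<not> cz c)) (mo \<or> (inp c \<noteq> 0 \<and> \<not> cz c \<and> co))"
  by (auto simp: rs_cell_def Let_def)

lemma rs_cell_snd:
  assumes "delta M q (mt c) = (qq, b, d)"
  shows "inp (snd (rs_cell M q dn q' ca co mo c)) = inp c"
    "mt (snd (rs_cell M q dn q' ca co mo c)) = (if \<not> dn \<and> hd c then b else mt c)"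
    "hd (snd (rs_cell M q dn q' ca co mo c)) = (if \<not> dn \<and> hd c then d \<noteq> Rgt else hd c \<or> ca)"
    "pl (snd (rs_cell M q dn q' ca co mo c)) = (if \<not> dn \<and> hd c \<and> d = Lft then True else pl c)"
    "cz (snd (rs_cell M q dn q' ca co mo c)) = (cz c \<or> (inp c \<noteq> 0 \<and> \<not> co))"
    "c0 (snd (rs_cell M q dn q' ca co mo c)) = c0 c"
    "ii (snd (rs_cell M q dn q' ca co mo c)) = ii c"
    "tc (snd (rs_cell M q dn q' ca co mo c)) = True"
  using assms by (auto simp: rs_cell_def Let_def)

lemma ls_cell_fst: "fst (ls_cell q ca c) = LSt q (pl c)"
  by (auto simp: ls_cell_def Let_def)

lemma ls_cell_snd:
    "inp (snd (ls_cell q ca c)) = inp c"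
    "mt (snd (ls_cell q ca c)) = mt c"
    "hd (snd (ls_cell q ca c)) = (if pl c then False else hd c \<or> ca)"
    "pl (snd (ls_cell q ca c)) = False"
    "cz (snd (ls_cell q ca c)) = cz c"
    "c0 (snd (ls_cell q ca c)) = c0 c"
    "ii (snd (ls_cell q ca c)) = ii c"
    "tc (snd (ls_cell q ca c)) = True"
  by (auto simp: ls_cell_def Let_def)

lemma ri_cell_fst: "fst (ri_cell e c) = RI (if (if c0 c \<and> e = 0 then 1 else e) = 1 \<and> \<not> ii c then 2
     else (if c0 c \<and> e = 0 then 1 else e))"
  by (auto simp: ri_cell_def Let_def)

lemma ri_cell_snd:
    "inp (snd (ri_cell e c)) = inp c"
    "ii (snd (ri_cell e c)) = (ii c \<or> ((if c0 c \<and> e = 0 then 1 else e) = 1 \<and> \<not> ii c))"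
    "mt (snd (ri_cell e c)) = (if ii c \<or> ((if c0 c \<and> e = 0 then 1 else e) = 1 \<and> \<not> ii c) then inp c else 0)"
    "hd (snd (ri_cell e c)) = c0 c"
    "pl (snd (ri_cell e c)) = False"
    "cz (snd (ri_cell e c)) = cz c"
    "c0 (snd (ri_cell e c)) = c0 c"
    "tc (snd (ri_cell e c)) = tc c"
  by (auto simp: ri_cell_def Let_def)

lemma zc_fields: "inp zc = 0" "mt zc = 0" "hd zc = False" "pl zc = False" "cz zc = False"
  "c0 zc = False" "ii zc = False" "tc zc = False" by (simp_all add: zc_def)

lemma tc_nz: "tc c \<Longrightarrow> c \<noteq> zc" by (auto simp: zc_def)
lemma inp_nz: "inp c \<noteq> 0 \<Longrightarrow> c \<noteq> zc" by (auto simp: zc_def)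

locale simloc =
  fixes M :: tm and l :: learning_fun and w :: "bool list"
  assumes wf: "wf_tm M" and comp: "\<forall>v. \<exists>t. fst (run M v t) = out_state (l v)"
begin

abbreviation Tk :: "nat \<Rightarrow> nat" where "Tk k \<equiv> HT M (take k w)"

definition Sb :: "nat \<Rightarrow> nat" where "Sb k = (\<Sum>i<k. Tk i)"

abbreviation Mr :: "nat \<Rightarrow> nat \<Rightarrow> config" where "Mr k j \<equiv> run M (take k w) j"

definition inpc :: "int \<Rightarrow> nat" where
  "inpc i = (if 0 \<le> i \<and> i < int (length w) then (if w ! nat i then 2 else 1) else 0)"

definition Inv :: "nat \<Rightarrow> nat \<Rightarrow> int \<Rightarrow> int \<Rightarrow> (int \<Rightarrow> cell) \<Rightarrow> bool" where
  "Inv k j L R T \<longleftrightarrow> (\<exists>q tp hh. Mr k j = (q, tp, hh) \<and>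
     j < Tk k \<and> Sb k + j < length w \<and> L \<le> 0 \<and> int (length w) \<le> R \<and>
     R - L \<le> int (length w) + int (Sb k + j) \<and> L \<le> hh \<and> hh < R \<and>
     (\<forall>i. (i < L \<or> R \<le> i) \<longrightarrow> T i = zc \<and> tp i = 0) \<and>
     (\<forall>i. L \<le> i \<and> i < R \<longrightarrow> inp (T i) = inpc i \<and> mt (T i) = tp i \<and> (hd (T i) \<longleftrightarrow> i = hh)
        \<and> \<not> pl (T i) \<and> (cz (T i) \<longleftrightarrow> 0 \<le> i \<and> i < int (Sb k + j)) \<and> (c0 (T i) \<longleftrightarrow> i = 0)
        \<and> (ii (T i) \<longleftrightarrow> 0 \<le> i \<and> i < int k) \<and> (inp (T i) \<noteq> 0 \<or> tc (T i))))"

lemma Tk_pos: "Tk k \<ge> 1" using HT_pos[OF comp] .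

lemma Sb_ge: "Sb k \<ge> k"
proof -
  have "(\<Sum>i<k. (1::nat)) \<le> (\<Sum>i<k. Tk i)" by (intro sum_mono) (use Tk_pos in auto)
  thus ?thesis by (simp add: Sb_def)
qed

lemma Sb_Suc: "Sb (Suc k) = Sb k + Tk k" by (simp add: Sb_def)

lemma inpc_nz: "inpc i \<noteq> 0 \<longleftrightarrow> 0 \<le> i \<and> i < int (length w)"
  by (simp add: inpc_def)

lemma not_halted: "j < Tk k \<Longrightarrow> fst (Mr k j) \<noteq> 1 \<and> fst (Mr k j) \<noteq> 2"
  using HT_iff[OF comp, of "take k w" j] by auto

lemma Mr_step: "j < Tk k \<Longrightarrow> Mr k j = (q, tp, hh) \<Longrightarrow> delta M q (tp hh) = (qq, b, d) \<Longrightarrow>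
   Mr k (Suc j) = (qq, tp(hh := b), hh + move d)"
  using not_halted[of j k] by (simp add: run_Suc step_def)

lemma Inv_D:
  assumes "Inv k j L R T" "Mr k j = (q, tp, hh)"
  shows "j < Tk k" "Sb k + j < length w" "L \<le> 0" "int (length w) \<le> R"
     "R - L \<le> int (length w) + int (Sb k + j)" "L \<le> hh" "hh < R"
     "\<And>i. (i < L \<or> R \<le> i) \<Longrightarrow> T i = zc \<and> tp i = 0"
     "\<And>i. L \<le> i \<Longrightarrow> i < R \<Longrightarrow> inp (T i) = inpc i \<and> mt (T i) = tp i \<and> (hd (T i) \<longleftrightarrow> i = hh)
        \<and> \<not> pl (T i) \<and> (cz (T i) \<longleftrightarrow> 0 \<le> i \<and> i < int (Sb k + j)) \<and> (c0 (T i) \<longleftrightarrow> i = 0)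
        \<and> (ii (T i) \<longleftrightarrow> 0 \<le> i \<and> i < int k) \<and> (inp (T i) \<noteq> 0 \<or> tc (T i))"
  using assms unfolding Inv_def by auto

definition rsD :: "nat \<Rightarrow> int \<Rightarrow> nat \<Rightarrow> dir \<Rightarrow> nat \<Rightarrow> int \<Rightarrow> ast" where
  "rsD q hh qq d s p = RSt q (hh < p) (if hh < p then qq else 0) (d = Rgt \<and> p = hh + 1) (int s < p)
      (int s + 1 < p \<and> s + 1 < length w)"

lemma rs_stage:
  assumes I: "Inv k j L R T" and mr: "Mr k j = (q, tp, hh)" and dl: "delta M q (tp hh) = (qq, b, d)"
    and E: "E = R + (if d = Rgt \<and> hh + 1 = R then 1 else 0)"
  shows "(astep M ^^ nat (E - L)) (RSt q False 0 False False False, T, L) =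
     (rsD q hh qq d (Sb k + j) E,
      \<lambda>i. if L \<le> i \<and> i < E then fst (snd (mtrans M (rsD q hh qq d (Sb k + j) i) (T i))) else T i, E)"
proof -
  let ?s = "Sb k + j"
  let ?D = "rsD q hh qq d ?s"
  note ID = Inv_D[OF I mr]
  have EL: "L + int (nat (E - L)) = E" using ID E by auto
  have DL: "?D L = RSt q False 0 False False False" using ID by (auto simp: rsD_def)
  have ob: "fst (mtrans M (?D p) (T p)) = ?D (p+1) \<and> snd (snd (mtrans M (?D p) (T p))) = Rgt
       \<and> ?D p \<noteq> Acc \<and> ?D p \<noteq> Rej" if p: "L \<le> p" "p < L + int (nat (E - L))" for p
  proof -
    have pE: "p < E" using p EL by simp
    have f: "(hd (T p) \<longleftrightarrow> p = hh) \<and> (p = hh \<longrightarrow> mt (T p) = tp hh) \<and>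
        (inp (T p) \<noteq> 0 \<longleftrightarrow> 0 \<le> p \<and> p < int (length w)) \<and> (cz (T p) \<longleftrightarrow> 0 \<le> p \<and> p < int ?s)
        \<and> \<not> (T p = zc \<and> \<not> (d = Rgt \<and> p = hh + 1))"
    proof (cases "p < R")
      case True
      then show ?thesis using ID(9)[of p] p inpc_nz[of p] tc_nz inp_nz by auto
    next
      case False
      hence pR: "p = R" "d = Rgt" "hh + 1 = R" using pE E by (auto split: if_splits)
      have "T p = zc" using ID(8)[of p] False by auto
      thus ?thesis using pR ID by (auto simp: zc_fields)
    qed
    have nz: "\<not> (T p = zc \<and> \<not> (d = Rgt \<and> p = hh + 1))" using f by blast
    have mt: "p = hh \<Longrightarrow> delta M q (mt (T p)) = (qq, b, d)" using f dl by auto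
    have tr: "mtrans M (?D p) (T p) = (fst (rs_cell M q (hh < p) (if hh < p then qq else 0) (d = Rgt \<and> p = hh + 1) (int ?s < p)
      (int ?s + 1 < p \<and> ?s + 1 < length w) (T p)), snd (rs_cell M q (hh < p) (if hh < p then qq else 0) (d = Rgt \<and> p = hh + 1) (int ?s < p)
      (int ?s + 1 < p \<and> ?s + 1 < length w) (T p)), Rgt)"
      unfolding rsD_def using nz by (simp only: mtrans.simps if_False)
    have h1: "hd (T p) = (p = hh)" using f by blast
    have h2: "(inp (T p) \<noteq> 0) = (0 \<le> p \<and> p < int (length w))" using f by blast
    have h3: "cz (T p) = (0 \<le> p \<and> p < int ?s)" using f by blast
    have sm: "int ?s < int (length w)" using ID(2) by simp
    have c1: "(hh < p \<or> hd (T p)) = (hh < p + 1)" unfolding h1 by arith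
    have c2: "(if \<not> hh < p \<and> hd (T p) then fst (delta M q (mt (T p))) else (if hh < p then qq else 0))
         = (if hh < p + 1 then qq else 0)"
    proof (cases "p = hh")
      case True thus ?thesis using mt h1 by simp
    next
      case False thus ?thesis using h1 by auto
    qed
    have c3: "(\<not> hh < p \<and> hd (T p) \<and> snd (snd (delta M q (mt (T p)))) = Rgt) = (d = Rgt \<and> p + 1 = hh + 1)"
    proof (cases "p = hh")
      case True thus ?thesis using mt h1 by simp
    next
      case False thus ?thesis using h1 by auto
    qed
    have c4: "(int ?s < p \<or> (inp (T p) \<noteq> 0 \<and> \<not> cz (T p))) = (int ?s < p + 1)"
      unfolding h2 h3 using sm by arith
    have c5: "((int ?s + 1 < p \<and> ?s + 1 < length w) \<or> (inp (T p) \<noteq> 0 \<and> \<not> cz (T p) \<and> int ?s < p))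
        = (int ?s + 1 < p + 1 \<and> ?s + 1 < length w)"
      unfolding h2 h3 using sm by arith
    show ?thesis unfolding tr fst_conv snd_conv rs_cell_fst c1 c2 c3 c4 c5
      by (simp add: rsD_def)
  qed
  show ?thesis
    using sweepR_fun[of L "nat (E - L)" M ?D T, OF ob] DL EL by simp
qed

lemma rs_T1:
  assumes I: "Inv k j L R T" and mr: "Mr k j = (q, tp, hh)" and dl: "delta M q (tp hh) = (qq, b, d)"
    and E: "E = R + (if d = Rgt \<and> hh + 1 = R then 1 else 0)"
    and T1: "T1 = (\<lambda>i. if L \<le> i \<and> i < E then fst (snd (mtrans M (rsD q hh qq d (Sb k + j) i) (T i))) else T i)"
  shows "\<And>i. (i < L \<or> E \<le> i) \<Longrightarrow> T1 i = zc"
    and "\<And>i. L \<le> i \<Longrightarrow> i < E \<Longrightarrow> inp (T1 i) = inpc i \<and> mt (T1 i) = (tp(hh := b)) i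
        \<and> (hd (T1 i) \<longleftrightarrow> (i = hh \<and> d \<noteq> Rgt) \<or> (i = hh + 1 \<and> d = Rgt))
        \<and> (pl (T1 i) \<longleftrightarrow> i = hh \<and> d = Lft) \<and> (cz (T1 i) \<longleftrightarrow> 0 \<le> i \<and> i < int (Sb k + j) + 1)
        \<and> (c0 (T1 i) \<longleftrightarrow> i = 0) \<and> (ii (T1 i) \<longleftrightarrow> 0 \<le> i \<and> i < int k) \<and> tc (T1 i)"
proof -
  let ?s = "Sb k + j"
  note ID = Inv_D[OF I mr]
  show "\<And>i. (i < L \<or> E \<le> i) \<Longrightarrow> T1 i = zc"
    using ID(8) E unfolding T1 by (auto split: if_splits)
  fix i assume i: "L \<le> i" "i < E"
  have f: "(hd (T i) \<longleftrightarrow> i = hh) \<and> mt (T i) = tp i \<and> inp (T i) = inpc i \<and>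
        (cz (T i) \<longleftrightarrow> 0 \<le> i \<and> i < int ?s) \<and> \<not> pl (T i) \<and> (c0 (T i) \<longleftrightarrow> i = 0)
        \<and> (ii (T i) \<longleftrightarrow> 0 \<le> i \<and> i < int k)
        \<and> \<not> (T i = zc \<and> \<not> (d = Rgt \<and> i = hh + 1))"
  proof (cases "i < R")
    case True
    then show ?thesis using ID(9)[of i] i tc_nz inp_nz by auto
  next
    case False
    hence pR: "i = R" "d = Rgt" "hh + 1 = R" using i E by (auto split: if_splits)
    have "T i = zc" "tp i = 0" using ID(8)[of i] False by auto
    moreover have "int k \<le> R" using Sb_ge[of k] ID(2,4) by linarith
    ultimately show ?thesis using pR ID by (auto simp: zc_fields inpc_def)
  qed
  have h1: "hd (T i) = (i = hh)" and h2: "mt (T i) = tp i" and h3: "inp (T i) = inpc i"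
    and h4: "cz (T i) = (0 \<le> i \<and> i < int ?s)" and h5: "\<not> pl (T i)" and h6: "c0 (T i) = (i = 0)"
    and h7: "ii (T i) = (0 \<le> i \<and> i < int k)" and nz: "\<not> (T i = zc \<and> \<not> (d = Rgt \<and> i = hh + 1))"
    using f by blast+
  have sm: "int ?s < int (length w)" using ID(2) by simp
  have T1i: "T1 i = snd (rs_cell M q (hh < i) (if hh < i then qq else 0) (d = Rgt \<and> i = hh + 1) (int ?s < i)
      (int ?s + 1 < i \<and> ?s + 1 < length w) (T i))"
    unfolding T1 rsD_def using i nz by (simp only: mtrans.simps if_False if_True) simp
  have dl': "delta M q (mt (T i)) = (if i = hh then (qq, b, d) else delta M q (tp i))"
    using dl h2 by simp
  obtain qx bx dx where dx: "delta M q (mt (T i)) = (qx, bx, dx)" by (cases "delta M q (mt (T i))") auto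
  have dxe: "i = hh \<Longrightarrow> qx = qq \<and> bx = b \<and> dx = d" using dx dl' by simp
  note rsn = rs_cell_snd[OF dx, of "hh < i" "if hh < i then qq else 0" "d = Rgt \<and> i = hh + 1" "int ?s < i"
      "int ?s + 1 < i \<and> ?s + 1 < length w"]
  have inpnz: "(inpc i \<noteq> 0) = (0 \<le> i \<and> i < int (length w))" by (rule inpc_nz)
  show "inp (T1 i) = inpc i \<and> mt (T1 i) = (tp(hh := b)) i
        \<and> (hd (T1 i) \<longleftrightarrow> (i = hh \<and> d \<noteq> Rgt) \<or> (i = hh + 1 \<and> d = Rgt))
        \<and> (pl (T1 i) \<longleftrightarrow> i = hh \<and> d = Lft) \<and> (cz (T1 i) \<longleftrightarrow> 0 \<le> i \<and> i < int (Sb k + j) + 1)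
        \<and> (c0 (T1 i) \<longleftrightarrow> i = 0) \<and> (ii (T1 i) \<longleftrightarrow> 0 \<le> i \<and> i < int k) \<and> tc (T1 i)"
  proof (intro conjI)
    show "inp (T1 i) = inpc i" unfolding T1i rsn h3 ..
    show "mt (T1 i) = (tp(hh := b)) i" unfolding T1i rsn h1 h2 using dxe by auto
    show "hd (T1 i) \<longleftrightarrow> (i = hh \<and> d \<noteq> Rgt) \<or> (i = hh + 1 \<and> d = Rgt)"
      unfolding T1i rsn h1 using dxe by auto
    show "pl (T1 i) \<longleftrightarrow> i = hh \<and> d = Lft" unfolding T1i rsn h1 using dxe h5 by auto
    show "cz (T1 i) \<longleftrightarrow> 0 \<le> i \<and> i < int (Sb k + j) + 1"
      unfolding T1i rsn h4 h3 inpnz using sm by arith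
    show "c0 (T1 i) \<longleftrightarrow> i = 0" unfolding T1i rsn h6 ..
    show "ii (T1 i) \<longleftrightarrow> 0 \<le> i \<and> i < int k" unfolding T1i rsn h7 ..
    show "tc (T1 i)" unfolding T1i rsn by simp
  qed
qed

lemma fp4: "(f ^^ (1 + b + 1 + a)) x = f ((f ^^ b) (f ((f ^^ a) x)))"
  by (simp only: funpow_add o_apply) simp

lemma ls_stage:
  assumes I: "Inv k j L R T" and mr: "Mr k j = (q, tp, hh)" and dl: "delta M q (tp hh) = (qq, b, d)"
    and E: "E = R + (if d = Rgt \<and> hh + 1 = R then 1 else 0)"
    and nh: "qq \<noteq> 1" "qq \<noteq> 2" and more: "Sb k + j + 1 < length w"
    and L': "L' = L - (if d = Lft \<and> hh = L then 1 else 0)"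
  shows "\<exists>T2. (astep M ^^ (1 + nat (E - L') + 1 + nat (E - L))) (RSt q False 0 False False False, T, L)
      = (RSt qq False 0 False False False, T2, L') \<and> Inv k (Suc j) L' E T2"
proof -
  let ?s = "Sb k + j"
  define T1 where "T1 = (\<lambda>i. if L \<le> i \<and> i < E then fst (snd (mtrans M (rsD q hh qq d ?s i) (T i))) else T i)"
  note ID = Inv_D[OF I mr]
  note st1 = rs_stage[OF I mr dl E, folded T1_def]
  note F1 = rs_T1[OF I mr dl E T1_def]
  have EL: "E \<ge> R" "E \<le> R + 1" using E by auto
  have T1E: "T1 E = zc" using F1(1)[of E] by simp
  have DE: "rsD q hh qq d ?s E = RSt q True qq False True True"
    using E ID more EL unfolding rsD_def by auto
  have st2: "astep M (rsD q hh qq d ?s E, T1, E) = (LSt qq False, T1, E - 1)"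
    unfolding DE using T1E nh by (simp add: astep_def move_def fun_upd_idem)
  define D2 where "D2 = (\<lambda>p. LSt qq (d = Lft \<and> p = hh - 1))"
  define n2 where "n2 = nat (E - L')"
  have L'b: "L' \<le> L" "L' \<ge> L - 1" "L' \<le> hh" using L' ID by auto
  have n2e: "E - 1 - int n2 = L' - 1" unfolding n2_def using L'b ID EL by auto
  have D2E: "D2 (E - 1) = LSt qq False" unfolding D2_def using ID EL by auto
  have ob: "fst (mtrans M (D2 p) (T1 p)) = D2 (p - 1) \<and> snd (snd (mtrans M (D2 p) (T1 p))) = Lft
       \<and> D2 p \<noteq> Acc \<and> D2 p \<noteq> Rej" if p: "E - 1 - int n2 < p" "p \<le> E - 1" for p
  proof -
    have pl': "pl (T1 p) = (p = hh \<and> d = Lft)" and nz: "\<not> (T1 p = zc \<and> \<not> (d = Lft \<and> p = hh - 1))"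
    proof -
      have "pl (T1 p) = (p = hh \<and> d = Lft) \<and> \<not> (T1 p = zc \<and> \<not> (d = Lft \<and> p = hh - 1))"
      proof (cases "L \<le> p")
        case True
        then show ?thesis using F1(2)[of p] p tc_nz by auto
      next
        case False
        hence "p = L - 1" "d = Lft" "hh = L" using p n2e L' by (auto split: if_splits)
        moreover have "T1 p = zc" using F1(1)[of p] False by auto
        ultimately show ?thesis by (auto simp: zc_fields)
      qed
      thus "pl (T1 p) = (p = hh \<and> d = Lft)" "\<not> (T1 p = zc \<and> \<not> (d = Lft \<and> p = hh - 1))" by blast+
    qed
    have "mtrans M (D2 p) (T1 p) = (fst (ls_cell qq (d = Lft \<and> p = hh - 1) (T1 p)),
        snd (ls_cell qq (d = Lft \<and> p = hh - 1) (T1 p)), Lft)"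
      unfolding D2_def using nz by (simp only: mtrans.simps if_False)
    thus ?thesis unfolding D2_def ls_cell_fst pl' by auto
  qed
  define T2 where "T2 = (\<lambda>i. if L' \<le> i \<and> i < E then fst (snd (mtrans M (D2 i) (T1 i))) else T1 i)"
  have T2eq: "(\<lambda>i. if E - 1 - int n2 < i \<and> i \<le> E - 1 then fst (snd (mtrans M (D2 i) (T1 i))) else T1 i) = T2"
    unfolding T2_def n2e
  proof (rule ext)
    fix i :: int
    have "(L' - 1 < i \<and> i \<le> E - 1) = (L' \<le> i \<and> i < E)" by arith
    thus "(if L' - 1 < i \<and> i \<le> E - 1 then fst (snd (mtrans M (D2 i) (T1 i))) else T1 i) =
         (if L' \<le> i \<and> i < E then fst (snd (mtrans M (D2 i) (T1 i))) else T1 i)" by simp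
  qed
  have st3: "(astep M ^^ n2) (LSt qq False, T1, E - 1) = (D2 (L' - 1), T2, L' - 1)"
  proof -
    have "(astep M ^^ n2) (D2 (E - 1), T1, E - 1) = (D2 (E - 1 - int n2),
     (\<lambda>i. if E - 1 - int n2 < i \<and> i \<le> E - 1 then fst (snd (mtrans M (D2 i) (T1 i))) else T1 i), E - 1 - int n2)"
      by (rule sweepL_fun) (use ob in blast)
    thus ?thesis unfolding T2eq unfolding D2E n2e .
  qed
  have T2L: "T2 (L' - 1) = zc" unfolding T2_def using F1(1)[of "L' - 1"] L'b by auto
  have D2L: "D2 (L' - 1) = LSt qq False" unfolding D2_def L' by auto
  have st4: "astep M (D2 (L' - 1), T2, L' - 1) = (RSt qq False 0 False False False, T2, L')"
    unfolding D2L using T2L by (simp add: astep_def move_def fun_upd_idem)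
  have run: "(astep M ^^ (1 + nat (E - L') + 1 + nat (E - L))) (RSt q False 0 False False False, T, L)
      = (RSt qq False 0 False False False, T2, L')"
    unfolding fp4 st1 st2 n2_def[symmetric] st3 st4 ..
  have mr2: "Mr k (Suc j) = (qq, tp(hh := b), hh + move d)" by (rule Mr_step[OF ID(1) mr dl])
  have j2: "Suc j < Tk k"
  proof -
    have "fst (Mr k (Suc j)) \<notin> {1,2}" using mr2 nh by simp
    thus ?thesis using HT_iff[OF comp, of "take k w" "Suc j"] by simp
  qed
  have PF: "pl (T1 p) = (p = hh \<and> d = Lft) \<and> (p < L \<longrightarrow> T1 p = zc \<and> p = L - 1)"
    if p: "L' \<le> p" "p < E" for p
  proof (cases "L \<le> p")
    case True
    then show ?thesis using F1(2)[of p] p by auto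
  next
    case False
    hence "p = L - 1" "d = Lft" "hh = L" using p L' by (auto split: if_splits)
    moreover have "T1 p = zc" using F1(1)[of p] False by auto
    ultimately show ?thesis by (auto simp: zc_fields)
  qed
  have T2i: "T2 i = snd (ls_cell qq (d = Lft \<and> i = hh - 1) (T1 i))" if i: "L' \<le> i" "i < E" for i
  proof -
    have nz: "\<not> (T1 i = zc \<and> \<not> (d = Lft \<and> i = hh - 1))"
    proof (cases "L \<le> i")
      case True thus ?thesis using F1(2)[of i] i tc_nz by auto
    next
      case False thus ?thesis using PF[OF i] L' i by (auto split: if_splits)
    qed
    show ?thesis unfolding T2_def D2_def using i nz by (simp only: mtrans.simps if_False if_True) simp
  qed
  have ins: "inp (T2 i) = inpc i \<and> mt (T2 i) = (tp(hh := b)) i \<and> (hd (T2 i) \<longleftrightarrow> i = hh + move d)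
        \<and> \<not> pl (T2 i) \<and> (cz (T2 i) \<longleftrightarrow> 0 \<le> i \<and> i < int (Sb k + Suc j)) \<and> (c0 (T2 i) \<longleftrightarrow> i = 0)
        \<and> (ii (T2 i) \<longleftrightarrow> 0 \<le> i \<and> i < int k) \<and> (inp (T2 i) \<noteq> 0 \<or> tc (T2 i))"
    if i: "L' \<le> i" "i < E" for i
  proof (cases "L \<le> i")
    case True
    have f: "inp (T1 i) = inpc i \<and> mt (T1 i) = (tp(hh := b)) i
        \<and> (hd (T1 i) \<longleftrightarrow> (i = hh \<and> d \<noteq> Rgt) \<or> (i = hh + 1 \<and> d = Rgt))
        \<and> (pl (T1 i) \<longleftrightarrow> i = hh \<and> d = Lft) \<and> (cz (T1 i) \<longleftrightarrow> 0 \<le> i \<and> i < int (Sb k + j) + 1)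
        \<and> (c0 (T1 i) \<longleftrightarrow> i = 0) \<and> (ii (T1 i) \<longleftrightarrow> 0 \<le> i \<and> i < int k) \<and> tc (T1 i)"
      using F1(2)[of i] True i by blast
    show ?thesis unfolding T2i[OF i] ls_cell_snd using f
      by (cases d) (auto simp: move_def)
  next
    case False
    hence e: "i = L - 1" "d = Lft" "hh = L" "T1 i = zc" using PF[OF i] i L' by (auto split: if_splits)
    have "tp i = 0" using ID(8)[of i] e by auto
    thus ?thesis unfolding T2i[OF i] ls_cell_snd using e ID(3) by (auto simp: zc_fields move_def inpc_def)
  qed
  have outs: "T2 i = zc \<and> (tp(hh := b)) i = 0" if i: "i < L' \<or> E \<le> i" for i
  proof -
    have "T2 i = T1 i" unfolding T2_def using i by auto
    moreover have "T1 i = zc" using F1(1)[of i] i L'b by auto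
    moreover have "i \<noteq> hh" using i L'b ID(7) EL by auto
    moreover have "tp i = 0" using ID(8)[of i] i L'b EL by auto
    ultimately show ?thesis by simp
  qed
  have hb: "L' \<le> hh + move d" "hh + move d < E" using L' E ID(6,7) by (cases d; auto simp: move_def)+
  have bnd: "E - L' \<le> int (length w) + int (Sb k + Suc j)"
    using E L' ID(5) by (auto split: if_splits)
  have "Inv k (Suc j) L' E T2"
    unfolding Inv_def
    apply (rule exI[of _ qq], rule exI[of _ "tp(hh := b)"], rule exI[of _ "hh + move d"])
    using mr2 j2 more L'b ID(3,4) EL bnd hb outs ins by auto (metis ins neq0_conv)
  thus ?thesis using run by blast
qed

lemma fp2: "(f ^^ (1 + a)) x = f ((f ^^ a) x)"
  by (simp only: funpow_add o_apply) simp

lemma fp8: "(f ^^ (1 + a + 1 + b + 1 + c + 1 + n)) x = f ((f ^^ a) (f ((f ^^ b) (f ((f ^^ c) (f ((f ^^ n) x)))))))"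
  by (simp only: funpow_add o_apply) simp

lemma fin_stage:
  assumes I: "Inv k j L R T" and mr: "Mr k j = (q, tp, hh)" and dl: "delta M q (tp hh) = (qq, b, d)"
    and E: "E = R + (if d = Rgt \<and> hh + 1 = R then 1 else 0)"
    and last: "Sb k + j + 1 = length w"
  shows "fst ((astep M ^^ (1 + nat (E - L))) (RSt q False 0 False False False, T, L)) = (if qq = 1 then Acc else Rej)"
proof -
  let ?s = "Sb k + j"
  define T1 where "T1 = (\<lambda>i. if L \<le> i \<and> i < E then fst (snd (mtrans M (rsD q hh qq d ?s i) (T i))) else T i)"
  note ID = Inv_D[OF I mr]
  note st1 = rs_stage[OF I mr dl E, folded T1_def]
  note F1 = rs_T1[OF I mr dl E T1_def]
  have EL: "E \<ge> R" "E \<le> R + 1" using E by auto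
  have T1E: "T1 E = zc" using F1(1)[of E] by simp
  have DE: "rsD q hh qq d ?s E = RSt q True qq False True False"
    using E ID last EL unfolding rsD_def by auto
  show ?thesis unfolding fp2 st1 DE using T1E by (simp add: astep_def)
qed

lemma halt_stage:
  assumes I: "Inv k j L R T" and mr: "Mr k j = (q, tp, hh)" and dl: "delta M q (tp hh) = (qq, b, d)"
    and E: "E = R + (if d = Rgt \<and> hh + 1 = R then 1 else 0)"
    and hlt: "qq = 1 \<or> qq = 2" and more: "Sb k + j + 1 < length w"
  shows "\<exists>T5. (astep M ^^ (1 + nat (E - L) + 1 + nat (E - L) + 1 + nat (E - L) + 1 + nat (E - L)))
      (RSt q False 0 False False False, T, L)
      = (RSt 0 False 0 False False False, T5, L) \<and> Inv (Suc k) 0 L E T5"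
proof -
  let ?s = "Sb k + j"
  let ?n = "nat (E - L)"
  define T1 where "T1 = (\<lambda>i. if L \<le> i \<and> i < E then fst (snd (mtrans M (rsD q hh qq d ?s i) (T i))) else T i)"
  note ID = Inv_D[OF I mr]
  note st1 = rs_stage[OF I mr dl E, folded T1_def]
  note F1 = rs_T1[OF I mr dl E T1_def]
  have EL: "E \<ge> R" "E \<le> R + 1" using E by auto
  have nE: "L + int ?n = E" "E - 1 - int ?n = L - 1" using EL ID by auto
  have T1E: "T1 E = zc" using F1(1)[of E] by simp
  have T1L: "T1 (L - 1) = zc" using F1(1)[of "L - 1"] by simp
  have kle: "int k < E" "k \<le> ?s" using Sb_ge[of k] ID(2,4) EL by auto
  have DE: "rsD q hh qq d ?s E = RSt q True qq False True True"
    using E ID more EL unfolding rsD_def by auto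
  have st2: "astep M (rsD q hh qq d ?s E, T1, E) = (LSret, T1, E - 1)"
    unfolding DE using T1E hlt by (auto simp: astep_def move_def fun_upd_idem)
  have nzT1: "T1 p \<noteq> zc" if "L \<le> p" "p < E" for p using F1(2)[OF that] tc_nz by blast
  have st3: "(astep M ^^ ?n) (LSret, T1, E - 1) = (LSret, T1, L - 1)"
  proof -
    have "(astep M ^^ ?n) ((\<lambda>_. LSret) (E - 1), T1, E - 1) = ((\<lambda>_. LSret) (E - 1 - int ?n),
     (\<lambda>i. if E - 1 - int ?n < i \<and> i \<le> E - 1 then fst (snd (mtrans M ((\<lambda>_. LSret) i) (T1 i))) else T1 i), E - 1 - int ?n)"
      by (rule sweepL_fun) (use nzT1 nE in auto)
    moreover have "(\<lambda>i. if E - 1 - int ?n < i \<and> i \<le> E - 1 then fst (snd (mtrans M ((\<lambda>_. LSret) i) (T1 i))) else T1 i) = T1"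
      by (rule ext) (use nzT1 nE in auto)
    ultimately show ?thesis unfolding nE by simp
  qed
  have st4: "astep M (LSret, T1, L - 1) = (RI 0, T1, L)"
    using T1L by (simp add: astep_def move_def fun_upd_idem)
  define D4 where "D4 = (\<lambda>p::int. RI (if p \<le> 0 then 0 else if p \<le> int k then 1 else 2))"
  define T4 where "T4 = (\<lambda>i. if L \<le> i \<and> i < E then snd (ri_cell (if i \<le> 0 then 0 else if i \<le> int k then 1 else 2) (T1 i)) else T1 i)"
  have ob4: "fst (mtrans M (D4 p) (T1 p)) = D4 (p+1) \<and> snd (snd (mtrans M (D4 p) (T1 p))) = Rgt
       \<and> D4 p \<noteq> Acc \<and> D4 p \<noteq> Rej" if p: "L \<le> p" "p < L + int ?n" for p
  proof -
    have pp: "L \<le> p" "p < E" using p nE by auto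
    have c: "(c0 (T1 p) \<longleftrightarrow> p = 0) \<and> (ii (T1 p) \<longleftrightarrow> 0 \<le> p \<and> p < int k)" using F1(2)[OF pp] by blast
    show ?thesis using nzT1[OF pp] c unfolding D4_def by (auto simp: ri_cell_fst)
  qed
  have st5: "(astep M ^^ ?n) (RI 0, T1, L) = (RI 2, T4, E)"
  proof -
    have "(astep M ^^ ?n) (D4 L, T1, L) = (D4 (L + int ?n),
     (\<lambda>i. if L \<le> i \<and> i < L + int ?n then fst (snd (mtrans M (D4 i) (T1 i))) else T1 i), L + int ?n)"
      by (rule sweepR_fun) (use ob4 in blast)
    moreover have "(\<lambda>i. if L \<le> i \<and> i < L + int ?n then fst (snd (mtrans M (D4 i) (T1 i))) else T1 i) = T4"
      unfolding nE(1) T4_def D4_def by (rule ext) (use nzT1 in auto)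
    moreover have "D4 L = RI 0" "D4 E = RI 2" unfolding D4_def using ID(3) kle by auto
    ultimately show ?thesis unfolding nE by simp
  qed
  have T4E: "T4 E = zc" unfolding T4_def using T1E by simp
  have st6: "astep M (RI 2, T4, E) = (LSt 0 False, T4, E - 1)"
    using T4E by (simp add: astep_def move_def fun_upd_idem)
  have F4: "inp (T4 i) = inpc i \<and> mt (T4 i) = (if 0 \<le> i \<and> i < int (Suc k) then inpc i else 0)
        \<and> (hd (T4 i) \<longleftrightarrow> i = 0) \<and> \<not> pl (T4 i) \<and> (cz (T4 i) \<longleftrightarrow> 0 \<le> i \<and> i < int ?s + 1)
        \<and> (c0 (T4 i) \<longleftrightarrow> i = 0) \<and> (ii (T4 i) \<longleftrightarrow> 0 \<le> i \<and> i < int (Suc k)) \<and> tc (T4 i)"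
    if i: "L \<le> i" "i < E" for i
  proof -
    have f: "inp (T1 i) = inpc i \<and> (cz (T1 i) \<longleftrightarrow> 0 \<le> i \<and> i < int ?s + 1)
        \<and> (c0 (T1 i) \<longleftrightarrow> i = 0) \<and> (ii (T1 i) \<longleftrightarrow> 0 \<le> i \<and> i < int k) \<and> tc (T1 i)"
      using F1(2)[OF i] by blast
    show ?thesis unfolding T4_def using i f by (auto simp: ri_cell_snd)
  qed
  have nzT4: "T4 p \<noteq> zc" if "L \<le> p" "p < E" for p using F4[OF that] tc_nz by blast
  define T5 where "T5 = (\<lambda>i. if L \<le> i \<and> i < E then snd (ls_cell 0 False (T4 i)) else T4 i)"
  have st7: "(astep M ^^ ?n) (LSt 0 False, T4, E - 1) = (LSt 0 False, T5, L - 1)"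
  proof -
    have "(astep M ^^ ?n) ((\<lambda>_. LSt 0 False) (E - 1), T4, E - 1) = ((\<lambda>_. LSt 0 False) (E - 1 - int ?n),
     (\<lambda>i. if E - 1 - int ?n < i \<and> i \<le> E - 1 then fst (snd (mtrans M ((\<lambda>_. LSt 0 False) i) (T4 i))) else T4 i), E - 1 - int ?n)"
    proof (rule sweepL_fun)
      fix p assume p: "E - 1 - int ?n < p" "p \<le> E - 1"
      hence pp: "L \<le> p" "p < E" using nE by auto
      show "fst (mtrans M (LSt 0 False) (T4 p)) = LSt 0 False \<and> snd (snd (mtrans M (LSt 0 False) (T4 p))) = Lft
        \<and> LSt 0 False \<noteq> Acc \<and> LSt 0 False \<noteq> Rej"
        using nzT4[OF pp] F4[OF pp] by (simp add: ls_cell_fst)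
    qed
    moreover have "(\<lambda>i. if E - 1 - int ?n < i \<and> i \<le> E - 1 then fst (snd (mtrans M ((\<lambda>_. LSt 0 False) i) (T4 i))) else T4 i) = T5"
      unfolding nE T5_def by (rule ext) (use nzT4 in auto)
    ultimately show ?thesis unfolding nE by simp
  qed
  have T5L: "T5 (L - 1) = zc" unfolding T5_def T4_def using T1L by simp
  have st8: "astep M (LSt 0 False, T5, L - 1) = (RSt 0 False 0 False False False, T5, L)"
    using T5L by (simp add: astep_def move_def fun_upd_idem)
  have run: "(astep M ^^ (1 + ?n + 1 + ?n + 1 + ?n + 1 + ?n)) (RSt q False 0 False False False, T, L)
      = (RSt 0 False 0 False False False, T5, L)"
    unfolding fp8 st1 st2 st3 st4 st5 st6 st7 st8 ..
  have mr2: "Mr k (Suc j) = (qq, tp(hh := b), hh + move d)" by (rule Mr_step[OF ID(1) mr dl])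
  have TkS: "Tk k = Suc j"
  proof -
    have "fst (Mr k (Suc j)) \<in> {1,2}" using mr2 hlt by simp
    hence "Tk k \<le> Suc j" using HT_iff[OF comp, of "take k w" "Suc j"] by simp
    thus ?thesis using ID(1) by simp
  qed
  have SbS: "Sb (Suc k) + 0 = Sb k + j + 1" using TkS Sb_Suc by simp
  have lt: "Suc k \<le> length w" using kle more by simp
  have ltk: "length (take (Suc k) w) = Suc k" using lt by simp
  have mr0: "Mr (Suc k) 0 = (0, \<lambda>i. if 0 \<le> i \<and> i < int (Suc k) then (if w ! nat i then 2 else 1) else 0, 0)"
    using lt by (auto simp: run_def init_config_def min_def fun_eq_iff)
  have ins: "inp (T5 i) = inpc i \<and> mt (T5 i) = (if 0 \<le> i \<and> i < int (Suc k) then (if w ! nat i then 2 else 1) else 0)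
        \<and> (hd (T5 i) \<longleftrightarrow> i = 0) \<and> \<not> pl (T5 i) \<and> (cz (T5 i) \<longleftrightarrow> 0 \<le> i \<and> i < int (Sb (Suc k) + 0))
        \<and> (c0 (T5 i) \<longleftrightarrow> i = 0) \<and> (ii (T5 i) \<longleftrightarrow> 0 \<le> i \<and> i < int (Suc k)) \<and> (inp (T5 i) \<noteq> 0 \<or> tc (T5 i))"
    if i: "L \<le> i" "i < E" for i
  proof -
    have f: "inp (T4 i) = inpc i \<and> mt (T4 i) = (if 0 \<le> i \<and> i < int (Suc k) then inpc i else 0)
        \<and> (hd (T4 i) \<longleftrightarrow> i = 0) \<and> \<not> pl (T4 i) \<and> (cz (T4 i) \<longleftrightarrow> 0 \<le> i \<and> i < int ?s + 1)
        \<and> (c0 (T4 i) \<longleftrightarrow> i = 0) \<and> (ii (T4 i) \<longleftrightarrow> 0 \<le> i \<and> i < int (Suc k))" using F4[OF i] by blast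
    have "0 \<le> i \<and> i < int (Suc k) \<Longrightarrow> inpc i = (if w ! nat i then 2 else 1)"
      using lt unfolding inpc_def by auto
    thus ?thesis unfolding T5_def using i f SbS by (auto simp: ls_cell_snd)
  qed
  have outs: "T5 i = zc \<and> (if 0 \<le> i \<and> i < int (Suc k) then (if w ! nat i then 2 else 1) else (0::nat)) = 0"
    if i: "i < L \<or> E \<le> i" for i
  proof -
    have "T5 i = zc" unfolding T5_def T4_def using F1(1)[of i] i by auto
    moreover have "\<not> (0 \<le> i \<and> i < int (Suc k))" using i ID(3) kle by auto
    ultimately show ?thesis by simp
  qed
  have bnd: "E - L \<le> int (length w) + int (Sb (Suc k) + 0)"
    using EL ID(5) SbS by simp
  have "Inv (Suc k) 0 L E T5"
    unfolding Inv_def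
    apply (rule exI[of _ 0], rule exI[of _ "\<lambda>i. if 0 \<le> i \<and> i < int (Suc k) then (if w ! nat i then 2 else 1) else 0"], rule exI[of _ 0])
    using mr0 Tk_pos[of "Suc k"] SbS more ID(3,4) EL bnd outs ins by auto (metis ins neq0_conv)
  thus ?thesis using run by blast
qed

end


lemma aux_b1: "(n::nat) \<le> (xx::nat) \<Longrightarrow> (aa::nat) \<le> 2 * (mm::nat) \<Longrightarrow>
   n + (1 + aa + 1 + aa + 1 + aa + 1 + aa) \<le> 8 * (mm + 1) + xx" by simp
lemma aux_b2: "(n::nat) \<le> (xx::nat) \<Longrightarrow> (aa::nat) \<le> 2 * (mm::nat) \<Longrightarrow> (ab::nat) \<le> 2 * mm + 1 \<Longrightarrow>
   n + (1 + ab + 1 + aa) \<le> 8 * (mm + 1) + xx" by simp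

context simloc
begin

lemma Sb_mono_lt: "a < b \<Longrightarrow> Sb a < Sb b"
proof (induction b)
  case 0 then show ?case by simp
next
  case (Suc b)
  have "Sb b < Sb (Suc b)" using Sb_Suc[of b] Tk_pos[of b] by simp
  then show ?case using Suc by (cases "a = b") auto
qed

lemma Sb_mono_le: "a \<le> b \<Longrightarrow> Sb a \<le> Sb b"
  using Sb_mono_lt by (cases "a = b") (auto simp: less_imp_le_nat order.strict_implies_order)

definition res :: bool where "res \<longleftrightarrow> (\<exists>k'. Sb (Suc k') = length w \<and> l (take k' w))"

lemma res_iff:
  assumes j: "j < Tk k" and s: "Sb k + j + 1 = length w" and mr: "Mr k (Suc j) = (qq, tp', hh')"
  shows "(qq = 1) \<longleftrightarrow> res"
proof
  assume q1: "qq = 1"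
  have "fst (Mr k (Suc j)) \<in> {1,2}" using mr q1 by simp
  hence "Tk k \<le> Suc j" by (rule iffD1[OF HT_iff[OF comp, of "take k w" "Suc j"]])
  hence TS: "Tk k = Suc j" using j by linarith
  have o: "fst (Mr k (Suc j)) = out_state (l (take k w))" using HT_out[OF comp, of "take k w"] unfolding TS .
  have "out_state (l (take k w)) = 1" using o mr q1 by simp
  hence L: "l (take k w)" by (cases "l (take k w)") (simp_all add: out_state_def)
  have "Sb (Suc k) = Sb k + Tk k" by (rule Sb_Suc)
  hence "Sb (Suc k) = length w" using TS s by linarith
  thus res unfolding res_def using L by blast
next
  assume res
  then obtain k' where k': "Sb (Suc k') = length w" "l (take k' w)" unfolding res_def by blast
  have SS: "Sb (Suc k) = Sb k + Tk k" by (rule Sb_Suc)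
  have "k < Suc k'"
  proof (rule ccontr)
    assume "\<not> k < Suc k'" hence "Suc k' \<le> k" by simp
    hence "Sb (Suc k') \<le> Sb k" by (rule Sb_mono_le)
    thus False using k'(1) s by linarith
  qed
  moreover have "Suc k' \<le> Suc k"
  proof (rule ccontr)
    assume "\<not> Suc k' \<le> Suc k" hence "Suc k < Suc k'" by simp
    hence "Sb (Suc k) < Sb (Suc k')" by (rule Sb_mono_lt)
    thus False using k'(1) j s SS by linarith
  qed
  ultimately have kk: "k' = k" by simp
  have TS: "Tk k = Suc j" using k'(1) s SS unfolding kk by linarith
  have o: "fst (Mr k (Suc j)) = out_state (l (take k w))" using HT_out[OF comp, of "take k w"] unfolding TS .
  have "l (take k w)" using k'(2) unfolding kk .
  thus "qq = 1" using o mr by (simp add: out_state_def)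
qed

lemma macro_all:
  "Inv k j L R T \<Longrightarrow> Mr k j = (q, tp, hh) \<Longrightarrow> length w - (Sb k + j) = r \<Longrightarrow>
   \<exists>n \<le> r * (8 * (length w + 1)). fst ((astep M ^^ n) (RSt q False 0 False False False, T, L)) = (if res then Acc else Rej)"
proof (induction r arbitrary: k j L R T q tp hh)
  case 0
  then show ?case using Inv_D(2)[OF 0(1,2)] by simp
next
  case (Suc r)
  note I = Suc.prems(1) and mr = Suc.prems(2)
  note ID = Inv_D[OF I mr]
  obtain qq b d where dl: "delta M q (tp hh) = (qq, b, d)" by (cases "delta M q (tp hh)") auto
  define E where "E = R + (if d = Rgt \<and> hh + 1 = R then 1 else 0)"
  have EL: "E - L \<le> 2 * int (length w)" using E_def ID(2,3,4,5) by auto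
  have mr2: "Mr k (Suc j) = (qq, tp(hh := b), hh + move d)" by (rule Mr_step[OF ID(1) mr dl])
  show ?case
  proof (cases "Sb k + j + 1 = length w")
    case True
    have r0: "r = 0" using Suc.prems(3) True by simp
    have X: "fst ((astep M ^^ (1 + nat (E - L))) (RSt q False 0 False False False, T, L)) = (if qq = 1 then Acc else Rej)"
      by (rule fin_stage[OF I mr dl E_def True])
    have RR: "(qq = 1) = res" by (rule res_iff[OF ID(1) True mr2])
    have X2: "fst ((astep M ^^ (1 + nat (E - L))) (RSt q False 0 False False False, T, L)) = (if res then Acc else Rej)"
      using X RR by (simp only:)
    have bd: "1 + nat (E - L) \<le> Suc r * (8 * (length w + 1))"
    proof -
      have c1: "nat (E - L) \<le> 2 * length w" using EL by (simp add: nat_le_iff)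
      show ?thesis using r0 c1 by simp
    qed
    show ?thesis by (rule exI[where x = "1 + nat (E - L)"], rule conjI[OF bd X2])
  next
    case False
    hence more: "Sb k + j + 1 < length w" using ID(2) by simp
    show ?thesis
    proof (cases "qq = 1 \<or> qq = 2")
      case True
      obtain T5 where T5: "(astep M ^^ (1 + nat (E - L) + 1 + nat (E - L) + 1 + nat (E - L) + 1 + nat (E - L)))
        (RSt q False 0 False False False, T, L) = (RSt 0 False 0 False False False, T5, L)"
        and I5: "Inv (Suc k) 0 L E T5"
        using halt_stage[OF I mr dl E_def True more] by (elim exE conjE) (rule that; assumption)
      have TkS: "Tk k = Suc j"
      proof -
        have "fst (Mr k (Suc j)) \<in> {1,2}" using mr2 True by simp
        hence "Tk k \<le> Suc j" by (rule iffD1[OF HT_iff[OF comp, of "take k w" "Suc j"]])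
        thus ?thesis using ID(1) by simp
      qed
      obtain tp0 hh0 where mr0: "Mr (Suc k) 0 = (0, tp0, hh0)"
        using run_0_state[of M "take (Suc k) w"] by (metis prod.collapse)
      have rr: "length w - (Sb (Suc k) + 0) = r" using Suc.prems(3) TkS Sb_Suc[of k] by simp
      obtain n where n: "n \<le> r * (8 * (length w + 1))"
        "fst ((astep M ^^ n) (RSt 0 False 0 False False False, T5, L)) = (if res then Acc else Rej)"
        using Suc.IH[OF I5 mr0 rr] by (elim exE conjE) (rule that; assumption)
      let ?c = "1 + nat (E - L) + 1 + nat (E - L) + 1 + nat (E - L) + 1 + nat (E - L)"
      have eq1: "(astep M ^^ (n + ?c)) (RSt q False 0 False False False, T, L) = (astep M ^^ n) (RSt 0 False 0 False False False, T5, L)"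
        unfolding funpow_add[of n ?c] o_apply T5 ..
      have bd: "n + ?c \<le> Suc r * (8 * (length w + 1))"
      proof -
        have c1: "nat (E - L) \<le> 2 * length w" using EL by (simp add: nat_le_iff)
        have e: "Suc r * (8 * (length w + 1)) = 8 * (length w + 1) + r * (8 * (length w + 1))" by simp
        show ?thesis unfolding e by (rule aux_b1[OF n(1) c1])
      qed
      have "fst ((astep M ^^ (n + ?c)) (RSt q False 0 False False False, T, L)) = (if res then Acc else Rej)"
        unfolding eq1 by (rule n(2))
      thus ?thesis by (intro exI[where x = "n + ?c"], intro conjI[OF bd])
    next
      case False
      hence nh: "qq \<noteq> 1" "qq \<noteq> 2" by auto
      define L' where "L' = L - (if d = Lft \<and> hh = L then 1 else 0)"
      obtain T2 where T2: "(astep M ^^ (1 + nat (E - L') + 1 + nat (E - L))) (RSt q False 0 False False False, T, L)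
      = (RSt qq False 0 False False False, T2, L')" and I2: "Inv k (Suc j) L' E T2"
        using ls_stage[OF I mr dl E_def nh more L'_def] by (elim exE conjE) (rule that; assumption)
      have EL': "E - L' \<le> 2 * int (length w) + 1" using EL L'_def by auto
      have rr: "length w - (Sb k + Suc j) = r" using Suc.prems(3) by simp
      obtain n where n: "n \<le> r * (8 * (length w + 1))"
        "fst ((astep M ^^ n) (RSt qq False 0 False False False, T2, L')) = (if res then Acc else Rej)"
        using Suc.IH[OF I2 mr2 rr] by (elim exE conjE) (rule that; assumption)
      let ?c = "1 + nat (E - L') + 1 + nat (E - L)"
      have eq1: "(astep M ^^ (n + ?c)) (RSt q False 0 False False False, T, L) = (astep M ^^ n) (RSt qq False 0 False False False, T2, L')"
        unfolding funpow_add[of n ?c] o_apply T2 ..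
      have bd: "n + ?c \<le> Suc r * (8 * (length w + 1))"
      proof -
        have c1: "nat (E - L) \<le> 2 * length w" using EL by (simp add: nat_le_iff)
        have c2: "nat (E - L') \<le> 2 * length w + 1" using EL' by (simp add: nat_le_iff)
        have e: "Suc r * (8 * (length w + 1)) = 8 * (length w + 1) + r * (8 * (length w + 1))" by simp
        show ?thesis unfolding e by (rule aux_b2[OF n(1) c1 c2])
      qed
      have "fst ((astep M ^^ (n + ?c)) (RSt q False 0 False False False, T, L)) = (if res then Acc else Rej)"
        unfolding eq1 by (rule n(2))
      thus ?thesis by (intro exI[where x = "n + ?c"], intro conjI[OF bd])
    qed
  qed
qed

end


context simloc
begin

lemma init_steps:
  assumes "w \<noteq> []"
  shows "(astep M ^^ 2) (Init, initT w, 0) =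
    (RSt 0 False 0 False False False, (initT w)(0 := (initT w 0)\<lparr>c0 := True, hd := True, tc := True\<rparr>), 0)"
proof -
  have nz: "initT w 0 \<noteq> zc" using assms by (auto simp: initT_def zc_def)
  have z: "initT w (-1) = zc" by (simp add: initT_def)
  have "astep M (Init, initT w, 0) = (LSt 0 False, (initT w)(0 := (initT w 0)\<lparr>c0 := True, hd := True, tc := True\<rparr>), -1)"
    using nz by (simp add: astep_def move_def)
  moreover have "astep M (LSt 0 False, (initT w)(0 := (initT w 0)\<lparr>c0 := True, hd := True, tc := True\<rparr>), -1) =
    (RSt 0 False 0 False False False, (initT w)(0 := (initT w 0)\<lparr>c0 := True, hd := True, tc := True\<rparr>), 0)"
    using z by (simp add: astep_def move_def fun_upd_idem)
  ultimately show ?thesis by (simp add: numeral_2_eq_2)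
qed

lemma init_Inv:
  assumes "w \<noteq> []"
  shows "Inv 0 0 0 (int (length w)) ((initT w)(0 := (initT w 0)\<lparr>c0 := True, hd := True, tc := True\<rparr>))"
proof -
  have mr: "Mr 0 0 = (0, \<lambda>_. 0, 0)" by (simp add: run_def init_config_def fun_eq_iff)
  have Sb0: "Sb 0 = 0" by (simp add: Sb_def)
  show ?thesis unfolding Inv_def Sb0
    apply (rule exI[of _ 0], rule exI[of _ "\<lambda>_. 0"], rule exI[of _ 0])
    using mr Tk_pos[of 0] assms by (auto simp: initT_def zc_def inpc_def)
qed

lemma res_nil: "w = [] \<Longrightarrow> \<not> res"
proof
  assume w: "w = []" and res
  then obtain k' where "Sb (Suc k') = length w" unfolding res_def by blast
  moreover have "Suc k' \<le> Sb (Suc k')" by (rule Sb_ge)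
  ultimately show False using w by simp
qed

lemma machine_result:
  "\<exists>n \<le> 17 * (length w + 1)^2. fst ((astep M ^^ n) (Init, initT w, 0)) = (if res then Acc else Rej)"
proof (cases "w = []")
  case True
  have "astep M (Init, initT w, 0) = (Rej, initT w, 0)"
    using True by (simp add: astep_def initT_def fun_upd_idem move_def)
  hence "fst ((astep M ^^ 1) (Init, initT w, 0)) = (if res then Acc else Rej)" using res_nil[OF True] by simp
  thus ?thesis by (intro exI[where x = 1] conjI) (simp_all add: True)
next
  case False
  let ?T0 = "(initT w)(0 := (initT w 0)\<lparr>c0 := True, hd := True, tc := True\<rparr>)"
  have mr: "Mr 0 0 = (0, \<lambda>_. 0, 0)" by (simp add: run_def init_config_def fun_eq_iff)
  have r: "length w - (Sb 0 + 0) = length w" by (simp add: Sb_def)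
  obtain n where n: "n \<le> length w * (8 * (length w + 1))"
    "fst ((astep M ^^ n) (RSt 0 False 0 False False False, ?T0, 0)) = (if res then Acc else Rej)"
    using macro_all[OF init_Inv[OF False] mr r] by (elim exE conjE) (rule that; assumption)
  have eq: "(astep M ^^ (n + 2)) (Init, initT w, 0) = (astep M ^^ n) (RSt 0 False 0 False False False, ?T0, 0)"
    unfolding funpow_add[of n 2] o_apply init_steps[OF False] ..
  have bd: "n + 2 \<le> 17 * (length w + 1)^2"
  proof -
    have "length w * (8 * (length w + 1)) + 2 \<le> 17 * (length w + 1)^2"
      by (simp add: power2_eq_square algebra_simps)
    thus ?thesis using n(1) by linarith
  qed
  have "fst ((astep M ^^ (n + 2)) (Init, initT w, 0)) = (if res then Acc else Rej)" unfolding eq by (rule n(2))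
  thus ?thesis by (intro exI[where x = "n + 2"], intro conjI[OF bd])
qed

end


lemma simloc_of: "tm_computes M l \<Longrightarrow> simloc M l"
  unfolding tm_computes_def by unfold_locales auto

lemma poly_of_comp:
  assumes "tm_computes M l"
  shows "tm_computes_in_time (simM M) (\<lambda>n. 17 * (n + 1) ^ 2) (simloc.res M l)"
proof -
  have sl: "simloc M l" by (rule simloc_of[OF assms])
  have wf: "wf_tm M" using assms by (simp add: tm_computes_def)
  have "fst (run (simM M) w (17 * (length w + 1) ^ 2)) = out_state (simloc.res M l w)" for w
  proof -
    interpret simloc M l w by (rule sl)
    obtain n where n: "n \<le> 17 * (length w + 1)^2"
      "fst ((astep M ^^ n) (Init, initT w, 0)) = (if res then Acc else Rej)"
      using machine_result by (elim exE conjE) (rule that; assumption)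
    obtain \<sigma> T' h' where cf0: "(astep M ^^ n) (Init, initT w, 0) = (\<sigma>, T', h')"
      by (cases "(astep M ^^ n) (Init, initT w, 0)") auto
    have "\<sigma> = (if res then Acc else Rej)" using n(2) unfolding cf0 by simp
    hence cf: "(astep M ^^ n) (Init, initT w, 0) = (if res then Acc else Rej, T', h')" using cf0 by simp
    have "(astep M ^^ (17 * (length w + 1)^2)) (Init, initT w, 0) = (if res then Acc else Rej, T', h')"
    proof -
      define d where "d = 17 * (length w + 1)^2 - n"
      have d: "17 * (length w + 1)^2 = d + n" using n(1) unfolding d_def by simp
      show ?thesis unfolding d funpow_add o_apply cf by (rule funpow_halt) simp
    qed
    hence "fst (run (simM M) w (17 * (length w + 1) ^ 2)) = encS (nstates M) (if res then Acc else Rej)"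
      unfolding run_simM[OF wf] by (simp only: encConf_def prod.case fst_conv)
    thus ?thesis by (simp add: out_state_def)
  qed
  thus ?thesis unfolding tm_computes_in_time_def using wf_simM[OF wf] by blast
qed

lemma take_restr: "i \<le> m \<Longrightarrow> take i (restr Y m) = restr Y i"
  by (simp add: restr_def take_map)

lemma length_restr: "length (restr Y m) = m" by (simp add: restr_def)

context
  fixes M l
  assumes sl: "simloc M l"
begin

definition GG :: "(nat \<Rightarrow> bool) \<Rightarrow> nat \<Rightarrow> nat" where
  "GG Y k = (\<Sum>i<Suc k. HT M (restr Y i))"

lemma comp': "\<forall>v. \<exists>t. fst (run M v t) = out_state (l v)"
  using sl by (simp add: simloc_def)

lemma GG_ge: "Suc k \<le> (\<Sum>i<Suc k. HT M (v i))"
proof -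
  have "(\<Sum>i<Suc k. (1::nat)) \<le> (\<Sum>i<Suc k. HT M (v i))"
    by (intro sum_mono) (use HT_pos[OF comp'] in auto)
  thus ?thesis by simp
qed

lemma GG_strict: "strict_mono (GG Y)"
proof (rule strict_monoI_Suc)
  fix k
  have "GG Y (Suc k) = GG Y k + HT M (restr Y (Suc k))" by (simp add: GG_def)
  thus "GG Y k < GG Y (Suc k)" using HT_pos[OF comp', of "restr Y (Suc k)"] by simp
qed

lemma res_restr: "simloc.res M l (restr Y m) \<longleftrightarrow> (\<exists>k. GG Y k = m \<and> l (restr Y k))"
proof -
  have sum_eq: "(\<Sum>i<Suc k. HT M (take i (restr Y m))) = GG Y k" if "Suc k \<le> m" for k
    unfolding GG_def by (rule sum.cong) (use that take_restr in auto)
  have r: "simloc.res M l (restr Y m) \<longleftrightarrow> (\<exists>k'. (\<Sum>i<Suc k'. HT M (take i (restr Y m))) = m \<and> l (take k' (restr Y m)))"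
    unfolding simloc.res_def[OF sl] simloc.Sb_def[OF sl] length_restr ..
  show ?thesis
  proof
    assume "simloc.res M l (restr Y m)"
    then obtain k where k: "(\<Sum>i<Suc k. HT M (take i (restr Y m))) = m" "l (take k (restr Y m))" using r by blast
    have le: "Suc k \<le> m" using GG_ge[of k "\<lambda>i. take i (restr Y m)"] k(1) by simp
    have g: "GG Y k = m" unfolding sum_eq[OF le, symmetric] by (rule k(1))
    have t: "take k (restr Y m) = restr Y k" using le by (intro take_restr) simp
    show "\<exists>k. GG Y k = m \<and> l (restr Y k)" using g k(2) unfolding t by blast
  next
    assume "\<exists>k. GG Y k = m \<and> l (restr Y k)"
    then obtain k where k: "GG Y k = m" "l (restr Y k)" by blast
    have le: "Suc k \<le> m" using GG_ge[of k "restr Y"] k(1) by (simp add: GG_def)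
    have g: "(\<Sum>i<Suc k. HT M (take i (restr Y m))) = m" unfolding sum_eq[OF le] by (rule k(1))
    have t: "take k (restr Y m) = restr Y k" using le by (intro take_restr) simp
    have "l (take k (restr Y m))" unfolding t by (rule k(2))
    thus "simloc.res M l (restr Y m)" using r g by blast
  qed
qed

lemma yes_set: "{m. simloc.res M l (restr Y m)} = GG Y ` {k. l (restr Y k)}"
proof (rule set_eqI)
  fix m
  show "m \<in> {m. simloc.res M l (restr Y m)} \<longleftrightarrow> m \<in> GG Y ` {k. l (restr Y k)}"
    unfolding mem_Collect_eq res_restr image_iff by blast
qed

end


lemma pred_coord: "Measurable.pred lambda_unif (\<lambda>Y. Y i = b)"
proof -
  have "Measurable.pred lambda_unif (\<lambda>Y. Y i \<in> {b})"
    unfolding lambda_unif_def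
    by (rule pred_sets2[of "{b}" "measure_pmf (bernoulli_pmf (1/2))"])
       (simp, rule measurable_component_singleton, simp)
  thus ?thesis by simp
qed

lemma restr_eq_iff: "length v = m \<Longrightarrow> restr Y m = v \<longleftrightarrow> (\<forall>i\<in>{..<m}. Y i = v ! i)"
proof
  assume a: "length v = m" "restr Y m = v"
  show "\<forall>i\<in>{..<m}. Y i = v ! i"
  proof
    fix i assume i: "i \<in> {..<m}"
    have "v ! i = restr Y m ! i" using a by simp
    also have "\<dots> = Y i" using i by (simp add: restr_def)
    finally show "Y i = v ! i" by simp
  qed
next
  assume "length v = m" "\<forall>i\<in>{..<m}. Y i = v ! i"
  thus "restr Y m = v" by (auto simp: restr_def intro!: nth_equalityI)
qed

lemma pred_restr: "Measurable.pred lambda_unif (\<lambda>Y. l0 (restr Y m))"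
proof -
  have eq: "(\<lambda>Y. l0 (restr Y m)) = (\<lambda>Y. \<exists>v\<in>{v. length v = m \<and> l0 v}. \<forall>i\<in>{..<m}. Y i = v ! i)"
  proof (rule ext)
    fix Y
    show "l0 (restr Y m) = (\<exists>v\<in>{v. length v = m \<and> l0 v}. \<forall>i\<in>{..<m}. Y i = v ! i)"
    proof
      assume "l0 (restr Y m)"
      thus "\<exists>v\<in>{v. length v = m \<and> l0 v}. \<forall>i\<in>{..<m}. Y i = v ! i"
        by (intro bexI[of _ "restr Y m"]) (auto simp: restr_def)
    next
      assume "\<exists>v\<in>{v. length v = m \<and> l0 v}. \<forall>i\<in>{..<m}. Y i = v ! i"
      then obtain v where v: "length v = m" "l0 v" "\<forall>i\<in>{..<m}. Y i = v ! i" by blast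
      hence "restr Y m = v" using restr_eq_iff by blast
      thus "l0 (restr Y m)" using v by simp
    qed
  qed
  show ?thesis unfolding eq
    by (intro pred_intros_countable_bounded pred_coord)
qed

lemma sets_A: "{Y \<in> space lambda_unif. \<exists>S. finite S \<and> card S \<ge> n \<and> S \<subseteq> {m. l0 (restr Y m)}} \<in> sets lambda_unif"
proof -
  have eq: "(\<lambda>Y. \<exists>S. finite S \<and> card S \<ge> n \<and> S \<subseteq> {m. l0 (restr Y m)}) =
     (\<lambda>Y. \<exists>xs::nat list. (distinct xs \<and> n \<le> length xs) \<and> (\<forall>m\<in>set xs. l0 (restr Y m)))"
  proof (rule ext, rule iffI)
    fix Y
    assume "\<exists>S. finite S \<and> card S \<ge> n \<and> S \<subseteq> {m. l0 (restr Y m)}"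
    then obtain S where S: "finite S" "card S \<ge> n" "S \<subseteq> {m. l0 (restr Y m)}" by blast
    obtain xs where xs: "set xs = S" "distinct xs" using finite_distinct_list[OF S(1)] by blast
    have "length xs = card S" using xs distinct_card by metis
    thus "\<exists>xs::nat list. (distinct xs \<and> n \<le> length xs) \<and> (\<forall>m\<in>set xs. l0 (restr Y m))"
      using xs S by (intro exI[of _ xs]) auto
  next
    fix Y
    assume "\<exists>xs::nat list. (distinct xs \<and> n \<le> length xs) \<and> (\<forall>m\<in>set xs. l0 (restr Y m))"
    then obtain xs :: "nat list" where xs: "distinct xs" "n \<le> length xs" "\<forall>m\<in>set xs. l0 (restr Y m)" by blast
    thus "\<exists>S. finite S \<and> card S \<ge> n \<and> S \<subseteq> {m. l0 (restr Y m)}"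
      by (intro exI[of _ "set xs"]) (auto simp: distinct_card)
  qed
  have "Measurable.pred lambda_unif (\<lambda>Y. \<exists>xs::nat list. (distinct xs \<and> n \<le> length xs) \<and> (\<forall>m\<in>set xs. l0 (restr Y m)))"
    by (intro pred_intros_countable pred_intros_conj1' pred_intros_countable_bounded pred_restr)
  hence "Measurable.pred lambda_unif (\<lambda>Y. \<exists>S. finite S \<and> card S \<ge> n \<and> S \<subseteq> {m. l0 (restr Y m)})"
    unfolding eq .
  thus ?thesis by (rule predE)
qed


lemma poly_imp_comp: "poly_time_computable_lf l \<Longrightarrow> computable_lf l"
  unfolding poly_time_computable_lf_def computable_lf_def tm_computes_in_time_def tm_computes_def
  by blast

lemma A_subset:
  assumes sl: "simloc M l"
  shows "{Y \<in> space lambda_unif. \<exists>S. finite S \<and> card S \<ge> n \<and> S \<subseteq> {m. simloc.res M l (restr Y m)}}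
       \<subseteq> {Y \<in> space lambda_unif. \<exists>S. finite S \<and> card S \<ge> n \<and> S \<subseteq> {m. l (restr Y m)}}"
proof (rule subsetI)
  fix Y assume "Y \<in> {Y \<in> space lambda_unif. \<exists>S. finite S \<and> card S \<ge> n \<and> S \<subseteq> {m. simloc.res M l (restr Y m)}}"
  then obtain S where Y: "Y \<in> space lambda_unif" and S: "finite S" "card S \<ge> n"
     "S \<subseteq> {m. simloc.res M l (restr Y m)}" by blast
  let ?G = "GG M Y"
  let ?K = "{k. l (restr Y k)}"
  have inj: "inj ?G" using strict_mono_imp_inj_on[OF GG_strict[OF sl]] .
  have SG: "S \<subseteq> ?G ` ?K" using S(3) yes_set[OF sl, of Y] by simp
  define S' where "S' = ?K \<inter> ?G -` S"
  have fin: "finite S'" unfolding S'_def using finite_vimageI[OF S(1) inj] by blast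
  have img: "?G ` S' = S" unfolding S'_def using SG by blast
  have "card S' = card S" using card_image[OF inj_on_subset[OF inj subset_UNIV, of S']] img by simp
  hence "finite S' \<and> card S' \<ge> n \<and> S' \<subseteq> ?K" using fin S(2) unfolding S'_def by auto
  thus "Y \<in> {Y \<in> space lambda_unif. \<exists>S. finite S \<and> card S \<ge> n \<and> S \<subseteq> {m. l (restr Y m)}}"
    using Y by blast
qed

lemma detect_transfer:
  assumes sl: "simloc M l" and d: "uniformly_weakly_detects l X"
  shows "uniformly_weakly_detects (simloc.res M l) X"
  unfolding uniformly_weakly_detects_def
proof (intro conjI allI)
  have inf: "infinite {m. l (restr X m)}" using d unfolding uniformly_weakly_detects_def by blast
  have inj: "inj (GG M X)" using strict_mono_imp_inj_on[OF GG_strict[OF sl]] .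
  show "infinite {m. simloc.res M l (restr X m)}"
    unfolding yes_set[OF sl] using inf finite_imageD[OF _ inj_on_subset[OF inj subset_UNIV]] by blast
next
  fix n :: nat
  have "emeasure lambda_unif {Y \<in> space lambda_unif. \<exists>S. finite S \<and> card S \<ge> n \<and> S \<subseteq> {m. simloc.res M l (restr Y m)}}
      \<le> emeasure lambda_unif {Y \<in> space lambda_unif. \<exists>S. finite S \<and> card S \<ge> n \<and> S \<subseteq> {m. l (restr Y m)}}"
    by (rule emeasure_mono[OF A_subset[OF sl] sets_A])
  also have "\<dots> \<le> ennreal ((1/2) ^ n)" using d unfolding uniformly_weakly_detects_def by blast
  finally show "emeasure lambda_unif {Y \<in> space lambda_unif. \<exists>S. finite S \<and> card S \<ge> n \<and> S \<subseteq> {m. simloc.res M l (restr Y m)}}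
      \<le> ennreal ((1/2) ^ n)" .
qed

theorem mainTheorem1:
  fixes X :: "nat \<Rightarrow> bool"
  shows "(\<exists>l. computable_lf l \<and> uniformly_weakly_detects l X) \<longleftrightarrow>
         (\<exists>l. poly_time_computable_lf l \<and> uniformly_weakly_detects l X)"
proof
  assume "\<exists>l. computable_lf l \<and> uniformly_weakly_detects l X"
  then obtain l M where c: "tm_computes M l" and d: "uniformly_weakly_detects l X"
    unfolding computable_lf_def by blast
  have sl: "simloc M l" by (rule simloc_of[OF c])
  have "poly_time_computable_lf (simloc.res M l)"
    unfolding poly_time_computable_lf_def using poly_of_comp[OF c] by blast
  thus "\<exists>l. poly_time_computable_lf l \<and> uniformly_weakly_detects l X"
    using detect_transfer[OF sl d] by blast
next
  assume "\<exists>l. poly_time_computable_lf l \<and> uniformly_weakly_detects l X"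
  thus "\<exists>l. computable_lf l \<and> uniformly_weakly_detects l X" using poly_imp_comp by blast
qed

end
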